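(* Let $\mathfrak g$, $m\in\mathbb Z_{>1}$, $Q_m(\mathfrak g)$ and $R_i$ ($i\in S$) be as in the context, and consider a seed $(Q_m(\mathfrak g),\mathbf X,\mathbf A)$. Let $p^\ast:\mathbb C(\mathbf X)\to\mathbb C(\mathbf A)$ be the map $p^\ast(X^i_n)=\prod_{v^j_k}(A^j_k)^{\varepsilon_{v^i_n,v^j_k}}$, the product over all vertices of $Q_m(\mathfrak g)$. Then for every $i\in S$ and every vertex $v^j_n$, $R_i^\ast(p^\ast(X^j_n))=p^\ast(X^j_n)$, where $R_i^\ast$ denotes the action of $R_i$ on $\mathbb C(\mathbf A)$; that is, $R_i$ belongs to the peripheral subgroup of the cluster modular group $\Gamma_{Q_m(\mathfrak g)}$.
   Context: Let $\mathfrak g$ be a finite-dimensional complex simple Lie algebra of rank $\ell$, $S=\{1,\dots,\ell\}$, of type $A_\ell$, $B_\ell$, $C_\ell$, $D_\ell$ ($\ell\ge4$), $E_{6,7,8}$, $F_4$ or $G_2$, with simple roots labelled: for $A_\ell,B_\ell,C_\ell$ the Dynkin diagram is the chain $1-2-\cdots-\ell$ ($\alpha_\ell$ short in $B_\ell$, long in $C_\ell$); $D_\ell$: chain $1-\cdots-(\ell-1)$ plus edge $(\ell-2)-\ell$; $E_\ell$: chain $1-2-3-5-6-\cdots-\ell$ plus edge $3-4$; $F_4$: chain $1-2-3-4$ with $\alpha_1,\alpha_2$ long; $G_2$: $\alpha_2$ long. Put $d_i=(\alpha_i,\alpha_i)/2$, normalized so that $d_i=1$ for all $i$ in types $A,D,E$;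 $(d_i)=(1,\dots,1,\tfrac12)$ for $B_\ell$; $(1,\dots,1,2)$ for $C_\ell$; $(1,1,\tfrac12,\tfrac12)$ for $F_4$; $(1,3)$ for $G_2$. Let $d=\min_id_i$, $d'=\max_id_i$. Quiver $Q(\mathfrak g)$: vertex set $\{v^i_n: i\in S, n\in d\mathbb Z\}$ with arrows, for all $n$: (simply-laced) orient each Dynkin edge from larger to smaller label, giving $C(\mathfrak g)$; arrows $v^i_n\to v^i_{n+1}$, and for each arrow $i\to j$ of $C(\mathfrak g)$ arrows $v^i_n\to v^j_n$ and $v^j_{n+1}\to v^i_n$. ($B_\ell$, $n\in\frac12\mathbb Z$) $v^i_n\to v^i_{n+1}$ for $i\le\ell-1$; $v^i_n\to v^{i-1}_n$, $v^{i-1}_{n+1}\to v^i_n$ for $2\le i\le\ell-1$; $v^\ell_n\to v^\ell_{n+1/2}$, $v^\ell_n\to v^{\ell-1}_{n-1/2}$, $v^{\ell-1}_{n+1/2}\to v^\ell_n$. ($C_\ell$, $n\in\mathbb Z$) $v^i_n\to v^i_{n+1}$ for $i\le\ell-1$; $v^i_n\to v^{i-1}_n$, $v^{i-1}_{n+1}\to v^i_n$ for $2\le i\le\ell-1$; $v^\ell_n\to v^\ell_{n+2}$, $v^\ell_n\to v^{\ell-1}_n$, $v^{\ell-1}_{n+2}\to v^\ell_n$. ($F_4$, $n\in\frac12\mathbb Z$) $v^i_n\to v^i_{n+1}$ ($i=1,2$); $v^2_n\to v^1_n$, $v^1_{n+1}\to v^2_n$; $v^3_n\to v^3_{n+1/2}$,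 $v^3_n\to v^2_{n-1/2}$, $v^2_{n+1/2}\to v^3_n$; $v^4_n\to v^4_{n+1/2}$, $v^4_n\to v^3_n$, $v^3_{n+1/2}\to v^4_n$. ($G_2$, $n\in\mathbb Z$) $v^1_n\to v^1_{n+1}$, $v^2_n\to v^2_{n+3}$, $v^2_n\to v^1_n$, $v^1_{n+3}\to v^2_n$. For an integer $m>1$, $Q_m(\mathfrak g)$ has vertex set $\{v^i_n: i\in S, n\in d\mathbb Z/d'm\mathbb Z\}$ and the same arrows with $n$ read modulo $d'm$. Exchange matrix: $\varepsilon_{uv}=\#\{u\to v\}-\#\{v\to u\}$. Cycles: for each $i$ the arrows $v^i_n\to v^i_{n+d_i}$ of $Q_m(\mathfrak g)$ form $d_i/d$ disjoint oriented cycles $P_{i,1},\dots,P_{i,d_i/d}$ (the cycle through $v^i_n$ consists of the $v^i_{n+kd_i}$, $k\in\mathbb Z$). Mutation of a seed (quiver with exchange matrix $\varepsilon$, variables $X_v$, $A_v$) at $k$: $\varepsilon'_{ij}=-\varepsilon_{ij}$ if $k\in\{i,j\}$, else $\varepsilon_{ij}+(|\varepsilon_{ik}|\varepsilon_{kj}+\varepsilon_{ik}|\varepsilon_{kj}|)/2$; $X'_k=X_k^{-1}$, $X'_i=X_i(1+X_k^{-\mathrm{sgn}(\varepsilon_{ik})})^{-\varepsilon_{ik}}$; $A'_k=A_k^{-1}(\prod_{\varepsilon_{kj}>0}A_j^{\varepsilon_{kj}}+\prod_{\varepsilon_{kj}<0}A_j^{-\varepsilon_{kj}})$, $A'_i=A_i$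 ($i\neq k$). For an oriented cycle $P: v_1\to\cdots\to v_p\to v_1$, $M(P)=\mu_{v_{p-2}}\cdots\mu_{v_1}$ and $R(P)=M(P)^{-1}\circ(v_{p-1},v_p)\circ\mu_{v_p}\mu_{v_{p-1}}\circ M(P)$ with $(v_{p-1},v_p)$ the transposition of vertex labels; $R(P_{i,\gamma})$ preserves $Q_m(\mathfrak g)$, and $R_i:=R(P_{i,1})\circ\cdots\circ R(P_{i,d_i/d})$. The cluster modular group $\Gamma_Q$ is the group of mutation sequences (with permutations) preserving $Q$, modulo those preserving the seed. The action $R_i^\ast$ on $\mathbb C(\mathbf A)$ expresses the $A$-variables of the transformed seed in terms of the initial ones. *)

theory Defs
  imports Complex_Main
begin

datatype lie_type = TA nat | TB nat | TC nat | TD nat | TE nat | TF4 | TG2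

fun valid_type :: "lie_type \<Rightarrow> bool" where
  "valid_type (TA l) = (l \<ge> 1)"
| "valid_type (TB l) = (l \<ge> 2)"
| "valid_type (TC l) = (l \<ge> 2)"
| "valid_type (TD l) = (l \<ge> 4)"
| "valid_type (TE l) = (l \<in> {6,7,8})"
| "valid_type TF4 = True"
| "valid_type TG2 = True"

fun rank :: "lie_type \<Rightarrow> int" where
  "rank (TA l) = int l" | "rank (TB l) = int l" | "rank (TC l) = int l"
| "rank (TD l) = int l" | "rank (TE l) = int l" | "rank TF4 = 4" | "rank TG2 = 2"

text \<open>Time indices n \<in> d Z / d' m Z are encoded as t \<in> {0..<N} with n = d*t,
  where N = d' m / d.\<close>
fun ratio :: "lie_type \<Rightarrow> int" where
  "ratio (TB l) = 2" | "ratio (TC l) = 2" | "ratio TF4 = 2" | "ratio TG2 = 3"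
| "ratio _ = 1"

definition nsteps :: "lie_type \<Rightarrow> nat \<Rightarrow> int" where
  "nsteps g m = ratio g * int m"

text \<open>d_i / d, the step (in units of d) of the cycles through the vertices v^i.\<close>
fun cstep :: "lie_type \<Rightarrow> int \<Rightarrow> int" where
  "cstep (TB l) i = (if i \<le> int l - 1 then 2 else 1)"
| "cstep (TC l) i = (if i = int l then 2 else 1)"
| "cstep TF4 i = (if i \<in> {1,2} then 2 else 1)"
| "cstep TG2 i = (if i = 2 then 3 else 1)"
| "cstep _ i = 1"

text \<open>Arrows of C(g) for simply-laced types (oriented from larger to smaller label).\<close>
fun dynkin_arrows :: "lie_type \<Rightarrow> (int \<times> int) list" where
  "dynkin_arrows (TA l) = [(k+1, k). k \<leftarrow> [1..int l - 1]]"
| "dynkin_arrows (TD l) = [(k+1, k). k \<leftarrow> [1..int l - 2]] @ [(int l, int l - 2)]"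
| "dynkin_arrows (TE l) = [(2,1),(3,2),(5,3),(4,3)] @ [(k+1, k). k \<leftarrow> [5..int l - 1]]"
| "dynkin_arrows _ = []"

text \<open>Arrow families: (i,a,j,b) stands for the arrows v^i_{t+a} \<rightarrow> v^j_{t+b},
  one for every t (indices modulo N, shifts in units of d).\<close>
fun arrow_families :: "lie_type \<Rightarrow> (int \<times> int \<times> int \<times> int) list" where
  "arrow_families (TB l) =
     [(i,0,i,2). i \<leftarrow> [1..int l - 1]]
     @ concat [[(i,0,i-1,0),(i-1,2,i,0)]. i \<leftarrow> [2..int l - 1]]
     @ [(int l,0,int l,1),(int l,0,int l - 1,-1),(int l - 1,1,int l,0)]"
| "arrow_families (TC l) =
     [(i,0,i,1). i \<leftarrow> [1..int l - 1]]
     @ concat [[(i,0,i-1,0),(i-1,1,i,0)]. i \<leftarrow> [2..int l - 1]]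
     @ [(int l,0,int l,2),(int l,0,int l - 1,0),(int l - 1,2,int l,0)]"
| "arrow_families TF4 =
     [(1,0,1,2),(2,0,2,2),(2,0,1,0),(1,2,2,0),
      (3,0,3,1),(3,0,2,-1),(2,1,3,0),
      (4,0,4,1),(4,0,3,0),(3,1,4,0)]"
| "arrow_families TG2 = [(1,0,1,1),(2,0,2,3),(2,0,1,0),(1,3,2,0)]"
| "arrow_families g =
     [(i,0,i,1). i \<leftarrow> [1..rank g]]
     @ concat [[(i,0,j,0),(j,1,i,0)]. (i,j) \<leftarrow> dynkin_arrows g]"

type_synonym vertex = "int \<times> int"

definition Qverts :: "lie_type \<Rightarrow> nat \<Rightarrow> vertex set" where
  "Qverts g m = {(i,t). 1 \<le> i \<and> i \<le> rank g \<and> 0 \<le> t \<and> t < nsteps g m}"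

text \<open>Exchange matrix: (number of arrows u \<rightarrow> v) - (number of arrows v \<rightarrow> u).\<close>
definition Qeps :: "lie_type \<Rightarrow> nat \<Rightarrow> vertex \<Rightarrow> vertex \<Rightarrow> int" where
  "Qeps g m u v =
     (\<Sum>t\<in>{0..<nsteps g m}. sum_list
        (map (\<lambda>(i,a,j,b).
              (if (i, (t+a) mod nsteps g m) = u \<and> (j, (t+b) mod nsteps g m) = v then 1 else 0)
            - (if (i, (t+a) mod nsteps g m) = v \<and> (j, (t+b) mod nsteps g m) = u then 1 else 0))
          (arrow_families g)))"

type_synonym seed = "(vertex \<Rightarrow> vertex \<Rightarrow> int) \<times> (vertex \<Rightarrow> complex)"

definition mut_eps :: "(vertex \<Rightarrow> vertex \<Rightarrow> int) \<Rightarrow> vertex \<Rightarrow> vertex \<Rightarrow> vertex \<Rightarrow> int" where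
  "mut_eps e k i j =
     (if k = i \<or> k = j then - e i j
      else e i j + (\<bar>e i k\<bar> * e k j + e i k * \<bar>e k j\<bar>) div 2)"

definition mut_A :: "vertex set \<Rightarrow> (vertex \<Rightarrow> vertex \<Rightarrow> int) \<Rightarrow> vertex \<Rightarrow> (vertex \<Rightarrow> complex)
    \<Rightarrow> (vertex \<Rightarrow> complex)" where
  "mut_A V e k A = A(k := inverse (A k) *
     ((\<Prod>j\<in>{j\<in>V. e k j > 0}. A j ^ nat (e k j))
      + (\<Prod>j\<in>{j\<in>V. e k j < 0}. A j ^ nat (- e k j))))"

definition transp :: "vertex \<Rightarrow> vertex \<Rightarrow> vertex \<Rightarrow> vertex" where
  "transp a b x = (if x = a then b else if x = b then a else x)"

datatype step = Mut vertex | Swap vertex vertex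

fun apply_step :: "vertex set \<Rightarrow> step \<Rightarrow> seed \<Rightarrow> seed" where
  "apply_step V (Mut k) (e, A) = (mut_eps e k, mut_A V e k A)"
| "apply_step V (Swap a b) (e, A) =
     ((\<lambda>x y. e (transp a b x) (transp a b y)), (\<lambda>x. A (transp a b x)))"

fun trace :: "vertex set \<Rightarrow> step list \<Rightarrow> seed \<Rightarrow> seed list" where
  "trace V [] s = [s]"
| "trace V (x # xs) s = s # trace V xs (apply_step V x s)"

text \<open>The oriented cycle P_{i,\<gamma>+1} (\<gamma> = 0,...,d_i/d - 1) of arrows v^i_n \<rightarrow> v^i_{n+d_i},
  listed starting from v^i_{\<gamma> d}.\<close>
definition cycle_verts :: "lie_type \<Rightarrow> nat \<Rightarrow> int \<Rightarrow> int \<Rightarrow> vertex list" where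
  "cycle_verts g m i \<gamma> =
     map (\<lambda>k. (i, (\<gamma> + int k * cstep g i) mod nsteps g m))
         [0..<nat (nsteps g m div cstep g i)]"

text \<open>R(P) = M(P)^{-1} \<circ> (v_{p-1},v_p) \<circ> \<mu>_{v_p} \<mu>_{v_{p-1}} \<circ> M(P), M(P) = \<mu>_{v_{p-2}} ... \<mu>_{v_1};
  as a list of steps, the first element is applied first.\<close>
definition R_seq :: "vertex list \<Rightarrow> step list" where
  "R_seq vs =
     (let p = length vs; M = map Mut (take (p - 2) vs) in
      M @ [Mut (vs ! (p - 2)), Mut (vs ! (p - 1)), Swap (vs ! (p - 2)) (vs ! (p - 1))] @ rev M)"

text \<open>R_i = R(P_{i,1}) \<circ> ... \<circ> R(P_{i,d_i/d}): R(P_{i,d_i/d}) is applied first.\<close>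
definition Ri_seq :: "lie_type \<Rightarrow> nat \<Rightarrow> int \<Rightarrow> step list" where
  "Ri_seq g m i = concat (map (\<lambda>\<gamma>. R_seq (cycle_verts g m i \<gamma>)) (rev [0..cstep g i - 1]))"

definition pstar :: "lie_type \<Rightarrow> nat \<Rightarrow> (vertex \<Rightarrow> complex) \<Rightarrow> vertex \<Rightarrow> complex" where
  "pstar g m A u = (\<Prod>w\<in>Qverts g m. A w powi Qeps g m u w)"

end

theory Submission
  imports Defs
begin


definition run :: "vertex set \<Rightarrow> step list \<Rightarrow> seed \<Rightarrow> seed" where
  "run V xs s = foldl (\<lambda>s x. apply_step V x s) s xs"

lemma run_Nil[simp]: "run V [] s = s" by (simp add: run_def)
lemma run_Cons[simp]: "run V (x#xs) s = run V xs (apply_step V x s)" by (simp add: run_def)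
lemma run_append[simp]: "run V (xs@ys) s = run V ys (run V xs s)" by (simp add: run_def)

lemma trace_ne[simp]: "trace V xs s \<noteq> []"
  by (cases xs) auto

lemma last_trace: "last (trace V xs s) = run V xs s"
  by (induction xs arbitrary: s) (simp_all del: apply_step.simps)

lemma run_take_in_trace: "j \<le> length xs \<Longrightarrow> run V (take j xs) s \<in> set (trace V xs s)"
proof (induction xs arbitrary: s j)
  case Nil then show ?case by simp
next
  case (Cons x xs)
  then show ?case by (cases j) (simp_all del: apply_step.simps)
qed

lemma trace_append_set: "set (trace V ys (run V xs s)) \<subseteq> set (trace V (xs@ys) s)"
proof (induction xs arbitrary: s)
  case (Cons x xs)
  show ?case using Cons[of "apply_step V x s"] by (simp del: apply_step.simps) blast
qed simp

lemma even_aux: "even (\<bar>a::int\<bar> * b + a * \<bar>b\<bar>)"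
  by (cases "a \<ge> 0"; cases "b \<ge> 0") auto

lemma even_div_neg: "even (x::int) \<Longrightarrow> (- x) div 2 = - (x div 2)"
  by (elim evenE) simp

lemma mut_eps_invol: "mut_eps (mut_eps e k) k = e"
proof (intro ext)
  fix i j
  show "mut_eps (mut_eps e k) k i j = e i j"
  proof (cases "k = i \<or> k = j")
    case True then show ?thesis by (auto simp: mut_eps_def)
  next
    case False
    define X where "X = \<bar>e i k\<bar> * e k j + e i k * \<bar>e k j\<bar>"
    have ev: "even X" unfolding X_def by (rule even_aux)
    have "(\<bar>- e i k\<bar> * - e k j + - e i k * \<bar>- e k j\<bar>) = - X"
      unfolding X_def by simp
    then have "(\<bar>- e i k\<bar> * - e k j + - e i k * \<bar>- e k j\<bar>) div 2 = - (X div 2)"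
      using even_div_neg[OF ev] by simp
    then show ?thesis using False by (simp add: mut_eps_def X_def)
  qed
qed

definition skew :: "(vertex \<Rightarrow> vertex \<Rightarrow> int) \<Rightarrow> bool" where
  "skew e \<longleftrightarrow> (\<forall>x y. e x y = - e y x)"

lemma skew_mut: assumes "skew e" shows "skew (mut_eps e k)"
  unfolding skew_def
proof (intro allI)
  fix x y
  have s: "\<And>x y. e x y = - e y x" using assms unfolding skew_def by blast
  show "mut_eps e k x y = - mut_eps e k y x"
  proof (cases "k = x \<or> k = y")
    case True then show ?thesis using s[of x y] by (auto simp: mut_eps_def)
  next
    case False
    define X where "X = \<bar>e x k\<bar> * e k y + e x k * \<bar>e k y\<bar>"
    define Y where "Y = \<bar>e y k\<bar> * e k x + e y k * \<bar>e k x\<bar>"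
    have ev: "even X" unfolding X_def by (rule even_aux)
    have eq: "Y = - X"
      unfolding X_def Y_def using s[of y k] s[of k x] s[of x k] s[of k y] by (simp add: algebra_simps)
    have d: "Y div 2 = - (X div 2)" unfolding eq by (rule even_div_neg[OF ev])
    have "mut_eps e k x y = e x y + X div 2" using False by (simp add: mut_eps_def X_def)
    moreover have "mut_eps e k y x = e y x + Y div 2" using False by (simp add: mut_eps_def Y_def)
    ultimately show ?thesis using d s[of x y] by simp
  qed
qed

lemma mut_A_other[simp]: "x \<noteq> k \<Longrightarrow> mut_A V e k A x = A x"
  by (simp add: mut_A_def)

definition binom :: "vertex set \<Rightarrow> (vertex \<Rightarrow> vertex \<Rightarrow> int) \<Rightarrow> vertex \<Rightarrow> (vertex \<Rightarrow> complex) \<Rightarrow> complex" where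
  "binom V e k A = (\<Prod>j\<in>{j\<in>V. e k j > 0}. A j ^ nat (e k j))
      + (\<Prod>j\<in>{j\<in>V. e k j < 0}. A j ^ nat (- e k j))"

lemma mut_A_k: "mut_A V e k A k = inverse (A k) * binom V e k A"
  by (simp add: mut_A_def binom_def)

lemma binom_mut: assumes "e k k = 0"
  shows "binom V (mut_eps e k) k (mut_A V e k A) = binom V e k A"
proof -
  have r: "\<And>j. mut_eps e k k j = - e k j" by (simp add: mut_eps_def)
  have s1: "{j\<in>V. mut_eps e k k j > 0} = {j\<in>V. e k j < 0}" using r by auto
  have s2: "{j\<in>V. mut_eps e k k j < 0} = {j\<in>V. e k j > 0}" using r by auto
  have p1: "(\<Prod>j\<in>{j\<in>V. e k j < 0}. mut_A V e k A j ^ nat (mut_eps e k k j))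
          = (\<Prod>j\<in>{j\<in>V. e k j < 0}. A j ^ nat (- e k j))"
  proof (rule prod.cong[OF refl])
    fix j assume "j \<in> {j\<in>V. e k j < 0}"
    then have "j \<noteq> k" using assms by auto
    then show "mut_A V e k A j ^ nat (mut_eps e k k j) = A j ^ nat (- e k j)" using r by simp
  qed
  have p2: "(\<Prod>j\<in>{j\<in>V. e k j > 0}. mut_A V e k A j ^ nat (- mut_eps e k k j))
          = (\<Prod>j\<in>{j\<in>V. e k j > 0}. A j ^ nat (e k j))"
  proof (rule prod.cong[OF refl])
    fix j assume "j \<in> {j\<in>V. e k j > 0}"
    then have "j \<noteq> k" using assms by auto
    then show "mut_A V e k A j ^ nat (- mut_eps e k k j) = A j ^ nat (e k j)" using r by simp
  qed
  show ?thesis unfolding binom_def s1 s2 p1 p2 by simp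
qed

lemma mut_A_invol:
  assumes "e k k = 0" "A k \<noteq> 0" "mut_A V e k A k \<noteq> 0"
  shows "mut_A V (mut_eps e k) k (mut_A V e k A) = A"
proof (intro ext)
  fix x
  show "mut_A V (mut_eps e k) k (mut_A V e k A) x = A x"
  proof (cases "x = k")
    case True
    have b: "binom V e k A \<noteq> 0" using assms(3) by (simp add: mut_A_k)
    show ?thesis using True b assms(2)
      by (simp add: mut_A_k binom_mut[of e k, OF assms(1)])
  qed simp
qed

definition scl :: "vertex set \<Rightarrow> complex \<Rightarrow> (vertex \<Rightarrow> complex) \<Rightarrow> (vertex \<Rightarrow> complex)" where
  "scl S c A = (\<lambda>x. if x \<in> S then c * A x else A x)"

lemma prod_scl:
  assumes "finite P" "P \<inter> S = {y}" "n y = 1"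
  shows "(\<Prod>j\<in>P. scl S c A j ^ n j) = c * (\<Prod>j\<in>P. A j ^ n j)"
proof -
  have "(\<Prod>j\<in>P. scl S c A j ^ n j) = (\<Prod>j\<in>P. (if j \<in> S then c ^ n j else 1) * A j ^ n j)"
    by (rule prod.cong) (auto simp: scl_def power_mult_distrib)
  also have "\<dots> = (\<Prod>j\<in>P. (if j \<in> S then c ^ n j else 1)) * (\<Prod>j\<in>P. A j ^ n j)"
    by (rule prod.distrib)
  also have "(\<Prod>j\<in>P. (if j \<in> S then c ^ n j else 1)) = (\<Prod>j\<in>P \<inter> S. c ^ n j)"
    using assms(1) by (simp add: prod.If_cases)
  also have "\<dots> = c" using assms by simp
  finally show ?thesis .
qed

lemma mut_A_scl:
  assumes "finite V" "k \<notin> S"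
    and "{j\<in>V. e k j > 0} \<inter> S = {yp}" "e k yp = 1"
    and "{j\<in>V. e k j < 0} \<inter> S = {yn}" "e k yn = -1"
  shows "mut_A V e k (scl S c A) = scl (insert k S) c (mut_A V e k A)"
proof (intro ext)
  fix x
  show "mut_A V e k (scl S c A) x = scl (insert k S) c (mut_A V e k A) x"
  proof (cases "x = k")
    case True
    have "binom V e k (scl S c A) = c * binom V e k A"
      unfolding binom_def
      using prod_scl[of "{j\<in>V. e k j > 0}" S yp "\<lambda>j. nat (e k j)" c A]
        prod_scl[of "{j\<in>V. e k j < 0}" S yn "\<lambda>j. nat (- e k j)" c A] assms
      by (simp add: distrib_left)
    then show ?thesis using True assms(2) by (simp add: mut_A_k scl_def)
  next
    case False then show ?thesis by (auto simp: scl_def)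
  qed
qed


definition arr :: "nat \<Rightarrow> nat \<Rightarrow> nat \<Rightarrow> nat \<Rightarrow> bool" where
  "arr p j a b \<longleftrightarrow> (a+1=b \<and> b+1 \<le> j) \<or> (a=j \<and> b+1=j) \<or> (a+1=j \<and> b+1=p) \<or> (a+1=p \<and> b=j)
     \<or> (j \<le> a \<and> a+1 = b \<and> b+1 \<le> p)"

definition F :: "nat \<Rightarrow> nat \<Rightarrow> nat \<Rightarrow> nat \<Rightarrow> int" where
  "F p j a b = (if arr p j a b then 1 else 0) - (if arr p j b a then 1 else 0)"

lemma F_row: "j+3 \<le> p \<Longrightarrow> b < p \<Longrightarrow> F p j j b = (if b+1 = j then 1 else 0) + (if b = j+1 then 1 else 0) - (if b+1 = p then 1 else 0)"
  unfolding F_def arr_def by auto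

lemma F_col: "j+3 \<le> p \<Longrightarrow> a < p \<Longrightarrow> F p j a j = - ((if a+1 = j then 1 else 0) + (if a = j+1 then 1 else 0) - (if a+1 = p then 1 else 0))"
  unfolding F_def arr_def by auto

lemma F_step:
  assumes "j+3 \<le> p" "a < p" "b < p"
  shows "(if a = j \<or> b = j then - F p j a b
          else F p j a b + (\<bar>F p j a j\<bar> * F p j j b + F p j a j * \<bar>F p j j b\<bar>) div 2) = F p (Suc j) a b"
  using assms unfolding F_col[OF assms(1,2)] F_row[OF assms(1,3)]
  unfolding F_def arr_def by auto

lemma F_L3: "Suc j + 2 \<le> p \<Longrightarrow> j < b \<Longrightarrow> b < p \<Longrightarrow> F p (Suc j) j b = (if b+1 = p then 1 else 0) - (if b = j+1 then 1 else 0)"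
  unfolding F_def arr_def by auto

lemma F_L4: "2 \<le> p \<Longrightarrow> b < p \<Longrightarrow> F p (p-2) (p-2) b = - F p (p-2) (p-1) b"
  unfolding F_def arr_def by auto

lemma F_L0: "a < p \<Longrightarrow> b < p \<Longrightarrow> F p 0 a b = (if b = (a+1) mod p then 1 else 0) - (if a = (b+1) mod p then 1 else 0)"
  unfolding F_def arr_def
  by (cases "a+1 = p"; cases "b+1=p") auto


lemma sum_list_swap: "(\<Sum>t\<in>T. sum_list (map (g t) xs)) = sum_list (map (\<lambda>x. \<Sum>t\<in>T. g t x) xs)"
  by (induction xs) (simp_all add: sum.distrib)

lemma mod_shift_eq:
  fixes N t c s :: int
  assumes "0 < N" "0 \<le> t" "t < N"
  shows "((t + c) mod N = s) = (0 \<le> s \<and> s < N \<and> t = (s - c) mod N)"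
proof
  assume h: "(t + c) mod N = s"
  have "(s - c) mod N = ((t + c) mod N - c) mod N" using h by simp
  also have "\<dots> = (t + c - c) mod N" by (simp add: mod_diff_left_eq)
  also have "\<dots> = t" using assms by simp
  moreover have "0 \<le> (t + c) mod N" "(t + c) mod N < N" using assms(1) by simp_all
  ultimately show "0 \<le> s \<and> s < N \<and> t = (s - c) mod N" using h by simp
next
  assume h: "0 \<le> s \<and> s < N \<and> t = (s - c) mod N"
  then have "(t + c) mod N = ((s - c) mod N + c) mod N" by simp
  also have "\<dots> = (s - c + c) mod N" by (simp add: mod_add_left_eq)
  also have "\<dots> = s" using h by simp
  finally show "(t + c) mod N = s" .
qed

lemma sum_t:
  fixes N c s :: int
  assumes N: "0 < N"
  shows "(\<Sum>t\<in>{0..<N}. if (t + c) mod N = s \<and> P t then 1 else 0 :: int)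
       = (if 0 \<le> s \<and> s < N \<and> P ((s - c) mod N) then 1 else 0)"
proof -
  define t0 where "t0 = (s - c) mod N"
  have t0r: "t0 \<in> {0..<N}" using N by (simp add: t0_def)
  have "(\<Sum>t\<in>{0..<N}. if (t + c) mod N = s \<and> P t then 1 else 0 :: int)
      = (\<Sum>t\<in>{0..<N}. if t = t0 then (if 0 \<le> s \<and> s < N \<and> P t0 then 1 else 0) else 0)"
  proof (rule sum.cong[OF refl])
    fix t assume "t \<in> {0..<N}"
    then have "((t + c) mod N = s) = (0 \<le> s \<and> s < N \<and> t = t0)"
      using mod_shift_eq[OF N] by (simp add: t0_def)
    then show "(if (t + c) mod N = s \<and> P t then 1 else 0 :: int) = (if t = t0 then (if 0 \<le> s \<and> s < N \<and> P t0 then 1 else 0) else 0)"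
      by auto
  qed
  also have "\<dots> = (if 0 \<le> s \<and> s < N \<and> P t0 then 1 else 0)" using t0r by simp
  finally show ?thesis by (simp add: t0_def)
qed

lemma ind_swap: "(if (fa, X) = (a,z) \<and> (fb, Y) = (b,z') then 1 else 0) = (if Y = z' \<and> (fa = a \<and> fb = b \<and> X = z) then 1 else (0::int))"
  by auto

lemma nsteps_pos: "m > 0 \<Longrightarrow> nsteps g m > 0"
  by (cases g) (auto simp: nsteps_def)

lemma Qeps_formula:
  assumes m: "m > 0"
  shows "Qeps g m (a,z) (b,z') = sum_list (map (\<lambda>(fa,fx,fb,fy).
      (if fa = a \<and> fb = b \<and> 0 \<le> z' \<and> z' < nsteps g m \<and> (z' - fy + fx) mod nsteps g m = z then 1 else 0)
    - (if fa = b \<and> fb = a \<and> 0 \<le> z \<and> z < nsteps g m \<and> (z - fy + fx) mod nsteps g m = z' then 1 else 0))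
     (arrow_families g))"
proof -
  define N where "N = nsteps g m"
  have N: "0 < N" using nsteps_pos[OF m] by (simp add: N_def)
  have fam: "(\<Sum>t\<in>{0..<N}. (if (fa, (t+fx) mod N) = (a,z) \<and> (fb, (t+fy) mod N) = (b,z') then 1 else 0)
              - (if (fa, (t+fx) mod N) = (b,z') \<and> (fb, (t+fy) mod N) = (a,z) then 1 else 0))
     = (if fa = a \<and> fb = b \<and> 0 \<le> z' \<and> z' < N \<and> (z' - fy + fx) mod N = z then 1 else 0)
    - (if fa = b \<and> fb = a \<and> 0 \<le> z \<and> z < N \<and> (z - fy + fx) mod N = z' then 1 else 0 :: int)"
    for fa fx fb fy
  proof -
    have 1: "(\<Sum>t\<in>{0..<N}. (if (fa, (t+fx) mod N) = (a,z) \<and> (fb, (t+fy) mod N) = (b,z') then 1 else 0 :: int))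
        = (\<Sum>t\<in>{0..<N}. if (t + fy) mod N = z' \<and> (fa = a \<and> fb = b \<and> (t + fx) mod N = z) then 1 else 0)"
      by (simp only: ind_swap)
    have 2: "(\<Sum>t\<in>{0..<N}. (if (fa, (t+fx) mod N) = (b,z') \<and> (fb, (t+fy) mod N) = (a,z) then 1 else 0 :: int))
        = (\<Sum>t\<in>{0..<N}. if (t + fy) mod N = z \<and> (fa = b \<and> fb = a \<and> (t + fx) mod N = z') then 1 else 0)"
      by (simp only: ind_swap)
    have m1: "((z' - fy) mod N + fx) mod N = (z' - fy + fx) mod N" by (simp add: mod_add_left_eq)
    have m2: "((z - fy) mod N + fx) mod N = (z - fy + fx) mod N" by (simp add: mod_add_left_eq)
    show ?thesis unfolding sum_subtractf 1 2 sum_t[OF N] m1 m2 by (simp only: conj_ac)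
  qed
  show ?thesis
    unfolding Qeps_def N_def[symmetric] sum_list_swap
  proof (rule arg_cong[where f=sum_list], rule map_cong[OF refl])
    fix f :: "int \<times> int \<times> int \<times> int"
    obtain fa fx fb fy where f: "f = (fa,fx,fb,fy)" by (cases f) auto
    show "(\<lambda>x. \<Sum>t\<in>{0..<N}. (case x of (i, a', j, b') \<Rightarrow>
              (if (i, (t + a') mod N) = (a, z) \<and> (j, (t + b') mod N) = (b, z') then 1 else 0) -
              (if (i, (t + a') mod N) = (b, z') \<and> (j, (t + b') mod N) = (a, z) then 1 else 0))) f
      = (case f of (fa,fx,fb,fy) \<Rightarrow>
      (if fa = a \<and> fb = b \<and> 0 \<le> z' \<and> z' < N \<and> (z' - fy + fx) mod N = z then 1 else 0)
    - (if fa = b \<and> fb = a \<and> 0 \<le> z \<and> z < N \<and> (z - fy + fx) mod N = z' then 1 else (0::int)))"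
      unfolding f prod.case using fam[of fa fx fb fy] by (simp only:)
  qed
qed


type_synonym fam = "int \<times> int \<times> int \<times> int"

definition selfs :: "lie_type \<Rightarrow> fam list" where
  "selfs g = map (\<lambda>k. (k,0,k,cstep g k)) [1..rank g]"

fun pair_ok :: "lie_type \<Rightarrow> fam \<times> fam \<Rightarrow> bool" where
  "pair_ok g ((a,x,b,y),(a2,x2,b2,y2)) \<longleftrightarrow> a \<noteq> b \<and> a2 = b \<and> b2 = a
     \<and> cstep g a dvd (x - y + x2 - y2) \<and> cstep g b dvd (x - y + x2 - y2)"

definition struct_ok :: "lie_type \<Rightarrow> (fam \<times> fam) list \<Rightarrow> bool" where
  "struct_ok g prs \<longleftrightarrow> (\<forall>\<phi>::fam \<Rightarrow> int. sum_list (map \<phi> (arrow_families g))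
      = sum_list (map \<phi> (selfs g)) + sum_list (map (\<lambda>(f1,f2). \<phi> f1 + \<phi> f2) prs))
    \<and> (\<forall>pr\<in>set prs. pair_ok g pr)"

lemma sl_pairs: "sum_list (map \<phi> (concat (map (\<lambda>(i,j). [F1 i j, F2 i j]) xs)))
   = sum_list (map (\<lambda>(f1,f2). \<phi> f1 + \<phi> f2) (map (\<lambda>(i,j). (F1 i j, F2 i j)) xs))"
  by (induction xs) (auto simp: add.assoc)

lemma sl_pairs1: "sum_list (map \<phi> (concat (map (\<lambda>k. [F1 k, F2 k]) xs)))
   = sum_list (map (\<lambda>(f1,f2). \<phi> f1 + \<phi> f2) (map (\<lambda>k. (F1 k, F2 k)) xs))"
  by (induction xs) (auto simp: add.assoc)

definition SL :: "lie_type \<Rightarrow> bool" where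
  "SL g \<longleftrightarrow> (\<exists>l. g = TA l \<or> g = TD l \<or> g = TE l)"

lemma SL_fams: "SL g \<Longrightarrow> arrow_families g = map (\<lambda>i. (i,0,i,1)) [1..rank g]
     @ concat (map (\<lambda>(i,j). [(i,0,j,0),(j,1,i,0)]) (dynkin_arrows g))"
  unfolding SL_def by (auto simp del: dynkin_arrows.simps)

lemma SL_cstep: "SL g \<Longrightarrow> cstep g k = 1"
  unfolding SL_def by auto

lemma SL_dyn: "SL g \<Longrightarrow> (i,j) \<in> set (dynkin_arrows g) \<Longrightarrow> i \<noteq> j"
  unfolding SL_def by auto

lemma struct_SL: "SL g \<Longrightarrow> struct_ok g (map (\<lambda>(i,j). ((i,0,j,0),(j,1,i,0))) (dynkin_arrows g))"
proof -
  assume v: "SL g"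
  have "sum_list (map \<phi> (arrow_families g)) = sum_list (map \<phi> (selfs g))
      + sum_list (map (\<lambda>(f1,f2). \<phi> f1 + \<phi> f2) (map (\<lambda>(i,j). ((i,0,j,0),(j,1,i,0))) (dynkin_arrows g)))" for \<phi> :: "fam \<Rightarrow> int"
    unfolding SL_fams[OF v] selfs_def SL_cstep[OF v] sum_list_append map_append sl_pairs ..
  moreover have "\<forall>pr\<in>set (map (\<lambda>(i,j). ((i,0,j,0),(j,1,i,0))) (dynkin_arrows g)). pair_ok g pr"
    using SL_dyn[OF v] SL_cstep[OF v] by auto
  ultimately show ?thesis unfolding struct_ok_def by blast
qed

lemma upto_split_last: "1 \<le> l \<Longrightarrow> [1..l] = [1..l-1] @ [l::int]"
  by (metis diff_add_cancel upto_rec2 zle_diff1_eq)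

lemma struct_B: "valid_type (TB l) \<Longrightarrow> struct_ok (TB l)
   (map (\<lambda>k. ((k,0,k-1,0),(k-1,2,k,0))) [2..int l - 1] @ [((int l,0,int l - 1,-1),(int l - 1,1,int l,0))])"
proof -
  assume v: "valid_type (TB l)"
  have sf: "selfs (TB l) = map (\<lambda>k. (k,0,k,2)) [1..int l - 1] @ [(int l, 0, int l, 1)]"
    unfolding selfs_def using v by (simp add: upto_split_last)
  have "sum_list (map \<phi> (arrow_families (TB l))) = sum_list (map \<phi> (selfs (TB l)))
      + sum_list (map (\<lambda>(f1,f2). \<phi> f1 + \<phi> f2) (map (\<lambda>k. ((k,0,k-1,0),(k-1,2,k,0))) [2..int l - 1] @ [((int l,0,int l - 1,-1),(int l - 1,1,int l,0))]))" for \<phi> :: "fam \<Rightarrow> int"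
    unfolding sf arrow_families.simps sum_list_append map_append sl_pairs1 by (simp add: algebra_simps)
  moreover have "\<forall>pr\<in>set (map (\<lambda>k. ((k,0,k-1,0),(k-1,2,k,0))) [2..int l - 1] @ [((int l,0,int l - 1,-1),(int l - 1,1,int l,0))]). pair_ok (TB l) pr"
    by auto
  ultimately show ?thesis unfolding struct_ok_def by blast
qed

lemma struct_C: "valid_type (TC l) \<Longrightarrow> struct_ok (TC l)
   (map (\<lambda>k. ((k,0,k-1,0),(k-1,1,k,0))) [2..int l - 1] @ [((int l,0,int l - 1,0),(int l - 1,2,int l,0))])"
proof -
  assume v: "valid_type (TC l)"
  have sf: "selfs (TC l) = map (\<lambda>k. (k,0,k,1)) [1..int l - 1] @ [(int l, 0, int l, 2)]"
    unfolding selfs_def using v by (simp add: upto_split_last)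
  have "sum_list (map \<phi> (arrow_families (TC l))) = sum_list (map \<phi> (selfs (TC l)))
      + sum_list (map (\<lambda>(f1,f2). \<phi> f1 + \<phi> f2) (map (\<lambda>k. ((k,0,k-1,0),(k-1,1,k,0))) [2..int l - 1] @ [((int l,0,int l - 1,0),(int l - 1,2,int l,0))]))" for \<phi> :: "fam \<Rightarrow> int"
    unfolding sf arrow_families.simps sum_list_append map_append sl_pairs1 by (simp add: algebra_simps)
  moreover have "\<forall>pr\<in>set (map (\<lambda>k. ((k,0,k-1,0),(k-1,1,k,0))) [2..int l - 1] @ [((int l,0,int l - 1,0),(int l - 1,2,int l,0))]). pair_ok (TC l) pr"
    by auto
  ultimately show ?thesis unfolding struct_ok_def by blast
qed

lemma struct_F: "struct_ok TF4 [((2,0,1,0),(1,2,2,0)), ((3,0,2,-1),(2,1,3,0)), ((4,0,3,0),(3,1,4,0))]"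
proof -
  have sf: "selfs TF4 = [(1,0,1,2),(2,0,2,2),(3,0,3,1),(4,0,4,1)]"
    unfolding selfs_def by (simp add: upto.simps)
  show ?thesis unfolding struct_ok_def sf by (simp add: algebra_simps)
qed

lemma struct_G: "struct_ok TG2 [((2,0,1,0),(1,3,2,0))]"
proof -
  have sf: "selfs TG2 = [(1,0,1,1),(2,0,2,3)]"
    unfolding selfs_def by (simp add: upto.simps)
  show ?thesis unfolding struct_ok_def sf by (simp add: algebra_simps)
qed

lemma struct_ex: "valid_type g \<Longrightarrow> \<exists>prs. struct_ok g prs"
proof (cases g)
  case (TA l) then have "SL g" by (auto simp: SL_def)
  then show ?thesis using struct_SL by blast
next
  case (TD l) then have "SL g" by (auto simp: SL_def)
  then show ?thesis using struct_SL by blast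
next
  case (TE l) then have "SL g" by (auto simp: SL_def)
  then show ?thesis using struct_SL by blast
qed (use struct_B struct_C struct_F struct_G in auto)


lemma apply_Mut: "apply_step V (Mut k) s = (mut_eps (fst s) k, mut_A V (fst s) k (snd s))"
  by (cases s) simp

lemma run_Mut_Suc: "j < length vs \<Longrightarrow>
  run V (map Mut (take (Suc j) vs)) s = apply_step V (Mut (vs!j)) (run V (map Mut (take j vs)) s)"
  by (simp add: take_Suc_conv_app_nth del: apply_step.simps)

lemma middle:
  assumes sk: "skew E" and ab: "a \<noteq> b" and row: "\<forall>y. E a y = - E b y"
    and nz: "B0 a \<noteq> 0" "B0 b \<noteq> 0" "mut_A V E a B0 a \<noteq> 0"
  shows "\<exists>\<kappa>. \<kappa> \<noteq> 0 \<and> apply_step V (Swap a b) (mut_eps (mut_eps E a) b, mut_A V (mut_eps E a) b (mut_A V E a B0))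
           = (E, scl {a,b} \<kappa> B0)"
proof -
  have s: "\<And>x y. E x y = - E y x" using sk unfolding skew_def by blast
  have Ebb: "E b b = 0" using s[of b b] by simp
  have Eab: "E a b = 0" using spec[OF row, of b] Ebb by simp
  have Eba: "E b a = 0" using s[of b a] Eab by simp
  have Eaa: "E a a = 0" using s[of a a] by simp
  define B where "B = binom V E a B0"
  have BnZ: "B \<noteq> 0" using nz(3) by (simp add: mut_A_k B_def)
  define \<kappa> where "\<kappa> = B / (B0 a * B0 b)"
  have knz: "\<kappa> \<noteq> 0" using BnZ nz by (simp add: \<kappa>_def)
  have rowb: "\<And>y. mut_eps E a b y = E b y"
    using ab Eba by (auto simp: mut_eps_def)
  have setsP: "{y\<in>V. E b y > 0} = {y\<in>V. E a y < 0}" using row by auto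
  have setsN: "{y\<in>V. E b y < 0} = {y\<in>V. E a y > 0}" using row by auto
  have bb: "binom V E b B0 = B"
  proof -
    have p1: "(\<Prod>j\<in>{y\<in>V. E a y < 0}. B0 j ^ nat (E b j)) = (\<Prod>j\<in>{y\<in>V. E a y < 0}. B0 j ^ nat (- E a j))"
      by (rule prod.cong) (use row in auto)
    have p2: "(\<Prod>j\<in>{y\<in>V. E a y > 0}. B0 j ^ nat (- E b j)) = (\<Prod>j\<in>{y\<in>V. E a y > 0}. B0 j ^ nat (E a j))"
      by (rule prod.cong) (use row in auto)
    show ?thesis unfolding binom_def B_def setsP setsN p1 p2 by simp
  qed
  have b2: "binom V (mut_eps E a) b (mut_A V E a B0) = B"
  proof -
    have "binom V (mut_eps E a) b (mut_A V E a B0) = binom V E b (mut_A V E a B0)"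
      unfolding binom_def rowb by simp
    also have "\<dots> = binom V E b B0"
    proof -
      have p1: "(\<Prod>j\<in>{y\<in>V. E b y > 0}. mut_A V E a B0 j ^ nat (E b j)) = (\<Prod>j\<in>{y\<in>V. E b y > 0}. B0 j ^ nat (E b j))"
      proof (rule prod.cong[OF refl])
        fix j assume "j \<in> {y\<in>V. E b y > 0}" then have "j \<noteq> a" using Eba by auto
        then show "mut_A V E a B0 j ^ nat (E b j) = B0 j ^ nat (E b j)" by simp
      qed
      have p2: "(\<Prod>j\<in>{y\<in>V. E b y < 0}. mut_A V E a B0 j ^ nat (- E b j)) = (\<Prod>j\<in>{y\<in>V. E b y < 0}. B0 j ^ nat (- E b j))"
      proof (rule prod.cong[OF refl])
        fix j assume "j \<in> {y\<in>V. E b y < 0}" then have "j \<noteq> a" using Eba by auto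
        then show "mut_A V E a B0 j ^ nat (- E b j) = B0 j ^ nat (- E b j)" by simp
      qed
      show ?thesis unfolding binom_def p1 p2 ..
    qed
    finally show ?thesis using bb by simp
  qed
  define A2 where "A2 = mut_A V (mut_eps E a) b (mut_A V E a B0)"
  have A2b: "A2 b = inverse (B0 b) * B" unfolding A2_def using ab
    by (simp add: mut_A_k b2)
  have A2a: "A2 a = inverse (B0 a) * B" unfolding A2_def using ab
    by (simp add: mut_A_k B_def)
  have A2o: "\<And>x. x \<noteq> a \<Longrightarrow> x \<noteq> b \<Longrightarrow> A2 x = B0 x" unfolding A2_def by simp
  have Aeq: "(\<lambda>x. A2 (transp a b x)) = scl {a,b} \<kappa> B0"
  proof
    fix x
    show "A2 (transp a b x) = scl {a,b} \<kappa> B0 x"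
      using A2a A2b A2o nz ab unfolding scl_def transp_def \<kappa>_def
      by (auto simp: field_simps)
  qed
  define E1 where "E1 = mut_eps E a"
  define E2 where "E2 = mut_eps E1 b"
  have E1b: "\<And>u. E1 u b = E u b"
    unfolding E1_def mut_eps_def using Eab ab by auto
  have E1b': "\<And>v. E1 b v = E b v" unfolding E1_def by (rule rowb)
  have sxa: "\<And>x. E x a = - E x b" using s row by metis
  have Eeq: "(\<lambda>x y. E2 (transp a b x) (transp a b y)) = E"
  proof (intro ext)
    fix x y
    show "E2 (transp a b x) (transp a b y) = E x y"
    proof (cases "x \<in> {a,b} \<or> y \<in> {a,b}")
      case True
      have E1a: "\<And>v. E1 a v = - E a v" unfolding E1_def mut_eps_def by simp
      have E1a': "\<And>u. E1 u a = - E u a" unfolding E1_def mut_eps_def by simp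
      have E2b: "\<And>v. E2 b v = - E b v" unfolding E2_def mut_eps_def E1b' by simp
      have E2b': "\<And>u. E2 u b = - E u b" unfolding E2_def mut_eps_def E1b by simp
      have E2a: "\<And>v. v \<noteq> b \<Longrightarrow> E2 a v = - E a v" unfolding E2_def mut_eps_def
        using ab E1a Eab E1b by simp
      have E2a': "\<And>u. u \<noteq> b \<Longrightarrow> E2 u a = - E u a" unfolding E2_def mut_eps_def
        using ab E1a' Eba E1b' by simp
      have ra: "\<And>y. E a y = - E b y" using row by blast
      show ?thesis
      proof (cases "x = a")
        case xa: True
        then show ?thesis using ab E2b Ebb Eaa Eab Eba ra unfolding transp_def by auto
      next
        case xna: False
        show ?thesis
        proof (cases "x = b")
          case xb: True
          then show ?thesis using ab E2a E2b' Ebb Eaa Eab Eba ra unfolding transp_def by auto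
        next
          case xnb: False
          then have "y = a \<or> y = b" using True xna by auto
          then show ?thesis using xna xnb ab E2a' E2b' sxa[of x] unfolding transp_def by auto
        qed
      qed
    next
      case False
      define X where "X = \<bar>E x a\<bar> * E a y + E x a * \<bar>E a y\<bar>"
      have ev: "even X" unfolding X_def by (rule even_aux)
      have Y: "\<bar>E x b\<bar> * E b y + E x b * \<bar>E b y\<bar> = - X"
        unfolding X_def using sxa[of x] spec[OF row, of y] by (simp add: algebra_simps)
      have "E2 x y = E1 x y + (\<bar>E1 x b\<bar> * E1 b y + E1 x b * \<bar>E1 b y\<bar>) div 2"
        using False unfolding E2_def mut_eps_def by auto
      also have "\<dots> = E1 x y + (- X) div 2" unfolding E1b E1b' Y ..
      also have "E1 x y = E x y + X div 2" using False unfolding E1_def mut_eps_def X_def by auto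
      finally have "E2 x y = E x y" using even_div_neg[OF ev] by simp
      then show ?thesis using False unfolding transp_def by auto
    qed
  qed
  show ?thesis
    by (rule exI[of _ \<kappa>]) (simp add: knz Aeq Eeq[unfolded E2_def E1_def] A2_def[symmetric])
qed

lemma set_drop_nth: "y \<in> set (drop n xs) \<longleftrightarrow> (\<exists>c. n \<le> c \<and> c < length xs \<and> y = xs!c)"
proof
  assume "y \<in> set (drop n xs)"
  then obtain i where "i < length (drop n xs)" "y = drop n xs ! i" by (auto simp: in_set_conv_nth)
  then show "\<exists>c. n \<le> c \<and> c < length xs \<and> y = xs!c" by (intro exI[of _ "n+i"]) auto
next
  assume "\<exists>c. n \<le> c \<and> c < length xs \<and> y = xs!c"
  then obtain c where c: "n \<le> c" "c < length xs" "y = xs!c" by blast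
  then have "y = drop n xs ! (c - n)" by simp
  then show "y \<in> set (drop n xs)" using c by (metis diff_less_mono length_drop nth_mem)
qed

lemma half_sum: "((c::int) - \<bar>c\<bar>) div 2 + (c + \<bar>c\<bar>) div 2 = c"
  by (cases "c \<ge> 0") auto

lemma sum_two_deltas:
  fixes X :: "nat \<Rightarrow> int"
  assumes "u \<in> I" "v \<in> I" "u \<noteq> v" "finite I"
  shows "(\<Sum>k\<in>I. X k + (if k = u then \<alpha> else if k = v then \<beta> else 0)) = (\<Sum>k\<in>I. X k) + \<alpha> + \<beta>"
proof -
  have "(\<Sum>k\<in>I. X k + (if k = u then \<alpha> else if k = v then \<beta> else 0))
      = (\<Sum>k\<in>I. X k) + ((\<Sum>k\<in>I. (if k = u then \<alpha> else 0)) + (\<Sum>k\<in>I. (if k = v then \<beta> else 0)))"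
    unfolding sum.distrib[symmetric] using assms(3) by (intro arg_cong2[where f="(+)"] refl sum.cong) auto
  then show ?thesis using assms by simp
qed

lemma cycle_main:
  fixes V :: "vertex set" and vs :: "vertex list" and p :: nat and e A
  assumes fin: "finite V" and sub: "set vs \<subseteq> V" and dist: "distinct vs" and len: "length vs = p"
    and p2: "2 \<le> p" and sk: "skew e"
    and int: "\<forall>a<p. \<forall>b<p. e (vs!a) (vs!b) = F p 0 a b"
    and col: "\<forall>w. w \<notin> set vs \<longrightarrow> (\<Sum>k\<in>{0..<p}. e (vs!k) w) = 0"
    and nz: "\<forall>s\<in>set (trace V (R_seq vs) (e,A)). \<forall>v\<in>V. snd s v \<noteq> 0"
  shows "\<exists>\<kappa>. \<kappa> \<noteq> 0 \<and> run V (R_seq vs) (e,A) = (e, scl (set vs) \<kappa> A)"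
proof -
  define M where "M = map Mut (take (p-2) vs)"
  define a where "a = vs!(p-2)"
  define b where "b = vs!(p-1)"
  have lenM: "length M = p - 2" using len p2 by (simp add: M_def)
  have Rdef: "R_seq vs = M @ [Mut a, Mut b, Swap a b] @ rev M"
  proof -
    have "p - 1 = Suc (p - 2)" using p2 by simp
    then show ?thesis unfolding R_seq_def M_def a_def b_def Let_def len by simp
  qed
  define ES where "ES j = fst (run V (map Mut (take j vs)) (e,A))" for j
  define AS where "AS j = snd (run V (map Mut (take j vs)) (e,A))" for j
  have ES0: "ES 0 = e" and AS0: "AS 0 = A" by (simp_all add: ES_def AS_def)
  have ESS: "ES (Suc j) = mut_eps (ES j) (vs!j)" and ASS: "AS (Suc j) = mut_A V (ES j) (vs!j) (AS j)"
    if "j < p" for j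
    using that len by (simp_all add: ES_def AS_def run_Mut_Suc apply_Mut del: apply_step.simps)
  have inT: "(ES j, AS j) \<in> set (trace V (R_seq vs) (e,A))" if "j \<le> p - 2" for j
  proof -
    have "take j (R_seq vs) = map Mut (take j vs)"
      unfolding Rdef using that lenM by (simp add: M_def take_map min_def)
    then have "run V (map Mut (take j vs)) (e,A) \<in> set (trace V (R_seq vs) (e,A))"
      using run_take_in_trace[of j "R_seq vs" V "(e,A)"] that lenM unfolding Rdef by simp
    then show ?thesis by (simp add: ES_def AS_def)
  qed
  have nzS: "AS j v \<noteq> 0" if "j \<le> p - 2" "v \<in> V" for j v
    using nz inT[OF that(1)] that(2) by fastforce
  have vsV: "vs!c \<in> V" if "c < p" for c using sub that len by auto
  have nth_inj: "vs!c = vs!d \<longleftrightarrow> c = d" if "c < p" "d < p" for c d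
    using dist that len by (simp add: nth_eq_iff_index_eq)
  define inv where "inv j \<longleftrightarrow> skew (ES j) \<and> (\<forall>a<p. \<forall>b<p. ES j (vs!a) (vs!b) = F p j a b)
       \<and> (\<forall>w. w \<notin> set vs \<longrightarrow> (\<Sum>k\<in>{j..<p}. ES j (vs!k) w) = 0)" for j
  have INV: "inv j" if "j \<le> p - 2" for j
    using that
  proof (induction j)
    case 0 then show ?case using sk int col by (simp add: inv_def ES0)
  next
    case (Suc j)
    have j3: "j + 3 \<le> p" using Suc.prems p2 by simp
    have jp: "j < p" using j3 by simp
    have IH: "inv j" using Suc by simp
    define E where "E = ES j"
    define k where "k = vs!j"
    have E': "ES (Suc j) = mut_eps E k" using ESS[OF jp] by (simp add: E_def k_def)
    have skE: "skew E" using IH by (simp add: inv_def E_def)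
    have intE: "\<And>a b. a < p \<Longrightarrow> b < p \<Longrightarrow> E (vs!a) (vs!b) = F p j a b"
      using IH by (simp add: inv_def E_def)
    have colE: "\<And>w. w \<notin> set vs \<Longrightarrow> (\<Sum>k\<in>{j..<p}. E (vs!k) w) = 0"
      using IH unfolding inv_def E_def by blast
    have i1: "skew (ES (Suc j))" unfolding E' by (rule skew_mut[OF skE])
    have i2: "ES (Suc j) (vs!a) (vs!b) = F p (Suc j) a b" if ab: "a < p" "b < p" for a b
    proof -
      have "ES (Suc j) (vs!a) (vs!b) = (if a = j \<or> b = j then - F p j a b
          else F p j a b + (\<bar>F p j a j\<bar> * F p j j b + F p j a j * \<bar>F p j j b\<bar>) div 2)"
        unfolding E' mut_eps_def k_def using nth_inj[OF jp ab(1)] nth_inj[OF jp ab(2)]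
        by (auto simp: intE ab jp)
      also have "\<dots> = F p (Suc j) a b" by (rule F_step[OF j3 ab])
      finally show ?thesis .
    qed
    have i3: "(\<Sum>c\<in>{Suc j..<p}. ES (Suc j) (vs!c) w) = 0" if w: "w \<notin> set vs" for w
    proof -
      define cc where "cc = E k w"
      have wk: "w \<noteq> k" using w jp len by (auto simp: k_def)
      have trm: "ES (Suc j) (vs!c) w = E (vs!c) w + (if c = j+1 then (cc - \<bar>cc\<bar>) div 2
                    else if c = p - 1 then (cc + \<bar>cc\<bar>) div 2 else 0)"
        if c: "c \<in> {Suc j..<p}" for c
      proof -
        have cp: "c < p" and cj: "c \<noteq> j" using c by auto
        have ck: "vs!c \<noteq> k" using nth_inj[OF cp jp] cj by (simp add: k_def)
        have Eck: "E (vs!c) k = F p j c j" using intE[OF cp jp] by (simp add: k_def)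
        have Fv: "F p j c j = - ((if c+1 = j then 1 else 0) + (if c = j+1 then 1 else 0) - (if c+1 = p then 1 else 0))"
          by (rule F_col[OF j3 cp])
        have "ES (Suc j) (vs!c) w = E (vs!c) w + (\<bar>E (vs!c) k\<bar> * cc + E (vs!c) k * \<bar>cc\<bar>) div 2"
          unfolding E' mut_eps_def cc_def using ck wk by auto
        then show ?thesis unfolding Eck Fv using c j3 by auto
      qed
      have "(\<Sum>c\<in>{Suc j..<p}. ES (Suc j) (vs!c) w) = (\<Sum>c\<in>{Suc j..<p}. E (vs!c) w + (if c = j+1 then (cc - \<bar>cc\<bar>) div 2
                    else if c = p - 1 then (cc + \<bar>cc\<bar>) div 2 else 0))"
        by (rule sum.cong[OF refl]) (rule trm)
      also have "\<dots> = (\<Sum>c\<in>{Suc j..<p}. E (vs!c) w) + (cc - \<bar>cc\<bar>) div 2 + (cc + \<bar>cc\<bar>) div 2"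
        by (rule sum_two_deltas) (use j3 in auto)
      also have "(\<Sum>c\<in>{Suc j..<p}. E (vs!c) w) = - cc"
      proof -
        have "{j..<p} = insert j {Suc j..<p}" using jp by auto
        then have "(\<Sum>c\<in>{j..<p}. E (vs!c) w) = E (vs!j) w + (\<Sum>c\<in>{Suc j..<p}. E (vs!c) w)" by simp
        then show ?thesis using colE[OF w] by (simp add: cc_def k_def)
      qed
      finally show ?thesis using half_sum[of cc] by simp
    qed
    show ?case unfolding inv_def using i1 i2 i3 by blast
  qed
  define E where "E = ES (p-2)"
  define B0 where "B0 = AS (p-2)"
  have pa: "p - 2 < p" and pb: "p - 1 < p" using p2 by auto
  have IE: "inv (p-2)" by (rule INV) simp
  have skE: "skew E" using IE by (simp add: inv_def E_def)
  have ab: "a \<noteq> b" unfolding a_def b_def using nth_inj[OF pa pb] p2 by simp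
  have row: "\<forall>y. E a y = - E b y"
  proof
    fix y
    show "E a y = - E b y"
    proof (cases "y \<in> set vs")
      case True
      then obtain c where c: "c < p" "y = vs!c" using len by (auto simp: in_set_conv_nth)
      have "E a y = F p (p-2) (p-2) c" using IE c pa by (simp add: inv_def E_def a_def)
      moreover have "E b y = F p (p-2) (p-1) c" using IE c pb by (simp add: inv_def E_def b_def)
      ultimately show ?thesis using F_L4[OF p2 c(1)] by simp
    next
      case False
      have "(\<Sum>k\<in>{p-2..<p}. E (vs!k) y) = 0" using IE False unfolding inv_def E_def by blast
      moreover have "{p-2..<p} = {p-2, p-1}" using p2 by auto
      moreover have "p - 2 \<noteq> p - 1" using p2 by simp
      ultimately show ?thesis by (simp add: a_def b_def)
    qed
  qed
  have runM: "run V M (e,A) = (E, B0)" by (simp add: E_def B0_def ES_def AS_def M_def)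
  have nzB: "B0 a \<noteq> 0" "B0 b \<noteq> 0" using nzS[of "p-2"] vsV pa pb by (auto simp: B0_def a_def b_def)
  have nz1: "mut_A V E a B0 a \<noteq> 0"
  proof -
    have "take (Suc (p-2)) (R_seq vs) = M @ [Mut a]" unfolding Rdef using lenM by simp
    then have "run V (M @ [Mut a]) (e,A) \<in> set (trace V (R_seq vs) (e,A))"
      using run_take_in_trace[of "Suc (p-2)" "R_seq vs" V "(e,A)"] lenM p2 unfolding Rdef by simp
    moreover have "run V (M @ [Mut a]) (e,A) = (mut_eps E a, mut_A V E a B0)" using runM by simp
    ultimately show ?thesis using nz vsV[OF pa] by (fastforce simp: a_def)
  qed
  obtain \<kappa> where knz: "\<kappa> \<noteq> 0" and mid: "apply_step V (Swap a b) (mut_eps (mut_eps E a) b, mut_A V (mut_eps E a) b (mut_A V E a B0))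
           = (E, scl {a,b} \<kappa> B0)"
    using middle[OF skE ab row nzB nz1] by blast
  have runMid: "run V (M @ [Mut a, Mut b, Swap a b]) (e,A) = (E, scl {a,b} \<kappa> B0)"
    using runM mid by (simp del: apply_step.simps) (simp add: apply_Mut)
  have INVB: "run V (rev (map Mut (take j vs))) (ES j, scl (set (drop j vs)) \<kappa> (AS j)) = (e, scl (set vs) \<kappa> A)"
    if "j \<le> p - 2" for j
    using that
  proof (induction j)
    case 0 then show ?case by (simp add: ES0 AS0)
  next
    case (Suc j)
    have j3: "Suc j + 2 \<le> p" using Suc.prems p2 by simp
    have jp: "j < p" using j3 by simp
    define k where "k = vs!j"
    define S' where "S' = set (drop (Suc j) vs)"
    have Ij: "inv j" "inv (Suc j)" using INV Suc.prems by auto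
    have skj: "skew (ES j)" using Ij by (simp add: inv_def)
    have "ES j k k = - ES j k k" using skj unfolding skew_def by blast
    then have kk: "ES j k k = 0" by simp
    have take_eq: "rev (map Mut (take (Suc j) vs)) = Mut k # rev (map Mut (take j vs))"
      using jp len by (simp add: take_Suc_conv_app_nth k_def)
    have inS: "y \<in> S' \<longleftrightarrow> (\<exists>c. Suc j \<le> c \<and> c < p \<and> y = vs!c)" for y
      unfolding S'_def set_drop_nth len ..
    have kS: "k \<notin> S'" using inS nth_inj jp by (auto simp: k_def)
    have dropj: "set (drop j vs) = insert k S'"
      unfolding S'_def k_def using jp len by (simp add: Cons_nth_drop_Suc[symmetric])
    have Fv: "ES (Suc j) k (vs!c) = (if c+1 = p then 1 else 0) - (if c = j+1 then 1 else 0)" if "Suc j \<le> c" "c < p" for c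
      using Ij(2) that jp F_L3[OF j3, of c] by (simp add: inv_def k_def)
    have posS: "{y\<in>V. ES (Suc j) k y > 0} \<inter> S' = {vs!(p-1)}"
    proof
      show "{y\<in>V. ES (Suc j) k y > 0} \<inter> S' \<subseteq> {vs!(p-1)}"
      proof
        fix y assume y: "y \<in> {y\<in>V. ES (Suc j) k y > 0} \<inter> S'"
        then obtain c where c: "Suc j \<le> c" "c < p" "y = vs!c" using inS by auto
        then have "ES (Suc j) k y = (if c+1 = p then 1 else 0) - (if c = j+1 then 1 else 0)" using Fv by simp
        then have "c + 1 = p" using y by (auto split: if_splits)
        then show "y \<in> {vs!(p-1)}" using c by auto
      qed
      have m1: "vs!(p-1) \<in> S'" unfolding inS using j3 by (intro exI[of _ "p-1"]) auto
      have "ES (Suc j) k (vs!(p-1)) = 1" using Fv[of "p-1"] j3 by simp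
      then show "{vs!(p-1)} \<subseteq> {y\<in>V. ES (Suc j) k y > 0} \<inter> S'"
        using m1 vsV[OF pb] by auto
    qed
    have negS: "{y\<in>V. ES (Suc j) k y < 0} \<inter> S' = {vs!(Suc j)}"
    proof
      show "{y\<in>V. ES (Suc j) k y < 0} \<inter> S' \<subseteq> {vs!(Suc j)}"
      proof
        fix y assume y: "y \<in> {y\<in>V. ES (Suc j) k y < 0} \<inter> S'"
        then obtain c where c: "Suc j \<le> c" "c < p" "y = vs!c" using inS by auto
        then have "ES (Suc j) k y = (if c+1 = p then 1 else 0) - (if c = j+1 then 1 else 0)" using Fv by simp
        then have "c = j + 1" using y by (auto split: if_splits)
        then show "y \<in> {vs!(Suc j)}" using c by auto
      qed
      have "Suc j < p" using j3 by simp
      have m2: "vs!(Suc j) \<in> S'" unfolding inS using j3 by (intro exI[of _ "Suc j"]) auto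
      have "ES (Suc j) k (vs!(Suc j)) = -1" using Fv[of "Suc j"] j3 by simp
      then show "{vs!(Suc j)} \<subseteq> {y\<in>V. ES (Suc j) k y < 0} \<inter> S'"
        using m2 vsV[OF \<open>Suc j < p\<close>] by auto
    qed
    have vp: "ES (Suc j) k (vs!(p-1)) = 1" using Fv[of "p-1"] j3 by simp
    have vn: "ES (Suc j) k (vs!(Suc j)) = -1" using Fv[of "Suc j"] j3 by simp
    have sc: "mut_A V (ES (Suc j)) k (scl S' \<kappa> (AS (Suc j))) = scl (insert k S') \<kappa> (mut_A V (ES (Suc j)) k (AS (Suc j)))"
      by (rule mut_A_scl[of V k S' "ES (Suc j)", OF fin kS posS vp negS vn])
    have jle: "j \<le> p - 2" "Suc j \<le> p - 2" using Suc.prems by auto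
    have inv_A: "mut_A V (ES (Suc j)) k (AS (Suc j)) = AS j"
      unfolding ESS[OF jp] ASS[OF jp] k_def[symmetric]
      by (rule mut_A_invol[of "ES j" k, OF kk]) (use nzS[OF jle(1)] nzS[OF jle(2)] vsV[OF jp] ASS[OF jp] in \<open>auto simp: k_def\<close>)
    have inv_E: "mut_eps (ES (Suc j)) k = ES j"
      unfolding ESS[OF jp] k_def by (rule mut_eps_invol)
    have "run V (rev (map Mut (take (Suc j) vs))) (ES (Suc j), scl (set (drop (Suc j) vs)) \<kappa> (AS (Suc j)))
       = run V (rev (map Mut (take j vs))) (ES j, scl (set (drop j vs)) \<kappa> (AS j))"
      unfolding take_eq using sc inv_A inv_E dropj by (simp add: S'_def)
    also have "\<dots> = (e, scl (set vs) \<kappa> A)" using Suc jle by simp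
    finally show ?case .
  qed
  have dr: "set (drop (p-2) vs) = {a, b}"
  proof -
    have e1: "drop (p-2) vs = vs!(p-2) # drop (Suc (p-2)) vs" using Cons_nth_drop_Suc[of "p-2" vs] pa len by simp
    have e2: "drop (p-1) vs = vs!(p-1) # drop (Suc (p-1)) vs" using Cons_nth_drop_Suc[of "p-1" vs] pb len by simp
    have "Suc (p-2) = p-1" "Suc (p-1) = p" using p2 by auto
    then have "drop (p-2) vs = [a, b]" using e1 e2 len unfolding a_def b_def by simp
    then show ?thesis by simp
  qed
  have "run V (R_seq vs) (e,A) = run V (rev M) (run V (M @ [Mut a, Mut b, Swap a b]) (e,A))"
    unfolding Rdef by (metis append_assoc run_append)
  also have "\<dots> = run V (rev M) (E, scl {a,b} \<kappa> B0)" using runMid by simp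
  also have "\<dots> = (e, scl (set vs) \<kappa> A)"
    using INVB[of "p-2"] dr by (simp add: M_def E_def B0_def)
  finally show ?thesis using knz by blast
qed


lemma cstep_cases: "cstep g i = 1 \<or> cstep g i = ratio g" by (cases g) auto
lemma ratio_pos: "1 \<le> ratio g" by (cases g) auto
lemma cs_pos: "1 \<le> cstep g i" using cstep_cases[of g i] ratio_pos[of g] by auto
lemma cs_dvd: "cstep g i dvd nsteps g m" unfolding nsteps_def using cstep_cases[of g i] by auto
lemma p_ge2: assumes "2 \<le> m" shows "2 \<le> nsteps g m div cstep g i"
proof (cases "cstep g i = 1")
  case True
  have a: "int m \<le> ratio g * int m" using mult_right_mono[OF ratio_pos[of g], of "int m"] by simp
  have "nsteps g m div cstep g i = ratio g * int m" using True by (simp add: nsteps_def)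
  then show ?thesis using a assms by linarith
next
  case False
  then have "cstep g i = ratio g" using cstep_cases by blast
  then show ?thesis using assms ratio_pos[of g] by (simp add: nsteps_def)
qed

definition psi :: "int \<Rightarrow> int \<Rightarrow> int \<Rightarrow> int \<Rightarrow> int \<Rightarrow> fam \<Rightarrow> int" where
  "psi c i b Z \<gamma> f = (case f of (fa,fx,fb,fy) \<Rightarrow>
     (if fa = i \<and> fb = b \<and> (Z - fy + fx) mod c = \<gamma> then 1 else 0)
   - (if fa = b \<and> fb = i \<and> (Z + fy - fx) mod c = \<gamma> then 1 else 0))"

lemma psi_self: "psi (cstep g i) i b Z \<gamma> (k,0,k,cstep g k) = 0"
proof -
  have "(Z - cstep g i) mod cstep g i = (Z + cstep g i) mod cstep g i" by simp
  then show ?thesis unfolding psi_def by auto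
qed

lemma psi_pair: assumes "pair_ok g pr"
  shows "psi (cstep g i) i b Z \<gamma> (fst pr) + psi (cstep g i) i b Z \<gamma> (snd pr) = 0"
proof -
  obtain a x b' y a2 x2 b2 y2 where pr: "pr = ((a,x,b',y),(a2,x2,b2,y2))" by (metis prod.exhaust)
  have h: "a \<noteq> b'" "a2 = b'" "b2 = a" "cstep g a dvd (x - y + x2 - y2)" "cstep g b' dvd (x - y + x2 - y2)"
    using assms by (auto simp: pr)
  show ?thesis
  proof (cases "a = i")
    case True
    have "(Z - y + x) mod cstep g i = (Z + y2 - x2) mod cstep g i"
      using h(4) True by (simp add: mod_eq_dvd_iff algebra_simps)
    then show ?thesis using True h unfolding psi_def pr by auto
  next
    case F1: False
    show ?thesis
    proof (cases "b' = i")
      case True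
      have "(Z + y - x) mod cstep g i = (Z - y2 + x2) mod cstep g i"
      proof -
        have "cstep g i dvd (Z + y - x) - (Z - y2 + x2)"
          using h(5) True dvd_minus_iff[of "cstep g b'" "x - y + x2 - y2"] by (simp add: algebra_simps)
        then show ?thesis by (simp add: mod_eq_dvd_iff)
      qed
      then show ?thesis using True F1 h unfolding psi_def pr by auto
    next
      case False
      then show ?thesis using F1 h unfolding psi_def pr by auto
    qed
  qed
qed

lemma sum_psi_zero:
  assumes "struct_ok g prs"
  shows "sum_list (map (psi (cstep g i) i b Z \<gamma>) (arrow_families g)) = 0"
proof -
  have e: "sum_list (map (psi (cstep g i) i b Z \<gamma>) (arrow_families g))
     = sum_list (map (psi (cstep g i) i b Z \<gamma>) (selfs g))
       + sum_list (map (\<lambda>(f1,f2). psi (cstep g i) i b Z \<gamma> f1 + psi (cstep g i) i b Z \<gamma> f2) prs)"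
    using assms unfolding struct_ok_def by blast
  have s1: "sum_list (map (psi (cstep g i) i b Z \<gamma>) (selfs g)) = 0"
    unfolding selfs_def by (simp add: psi_self o_def)
  have s2: "sum_list (map (\<lambda>(f1,f2). psi (cstep g i) i b Z \<gamma> f1 + psi (cstep g i) i b Z \<gamma> f2) prs) = 0"
  proof -
    have "\<forall>pr\<in>set prs. (\<lambda>(f1,f2). psi (cstep g i) i b Z \<gamma> f1 + psi (cstep g i) i b Z \<gamma> f2) pr = 0"
      using assms psi_pair[of g _ i b Z \<gamma>] unfolding struct_ok_def by (auto simp: case_prod_beta)
    then show ?thesis by (induction prs) auto
  qed
  show ?thesis using e s1 s2 by simp
qed

lemma sum_self_chi:
  fixes \<chi> :: "fam \<Rightarrow> int"
  assumes "struct_ok g prs" "1 \<le> i" "i \<le> rank g"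
    and van: "\<And>fa fx fb fy. fa \<noteq> fb \<Longrightarrow> \<chi> (fa,fx,fb,fy) = 0"
    and van2: "\<And>k. k \<noteq> i \<Longrightarrow> \<chi> (k,0,k,cstep g k) = 0"
  shows "sum_list (map \<chi> (arrow_families g)) = \<chi> (i,0,i,cstep g i)"
proof -
  have e: "sum_list (map \<chi> (arrow_families g))
     = sum_list (map \<chi> (selfs g)) + sum_list (map (\<lambda>(f1,f2). \<chi> f1 + \<chi> f2) prs)"
    using assms(1) unfolding struct_ok_def by blast
  have s2: "sum_list (map (\<lambda>(f1,f2). \<chi> f1 + \<chi> f2) prs) = 0"
  proof -
    have "\<forall>pr\<in>set prs. (\<lambda>(f1,f2). \<chi> f1 + \<chi> f2) pr = 0"
    proof
      fix pr assume "pr \<in> set prs"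
      then have po: "pair_ok g pr" using assms(1) unfolding struct_ok_def by blast
      obtain a x b' y a2 x2 b2 y2 where pr: "pr = ((a,x,b',y),(a2,x2,b2,y2))" by (metis prod.exhaust)
      have "a \<noteq> b'" "a2 = b'" "b2 = a" using po by (auto simp: pr)
      then show "(\<lambda>(f1,f2). \<chi> f1 + \<chi> f2) pr = 0" using van unfolding pr by auto
    qed
    then show ?thesis by (induction prs) auto
  qed
  have s1: "sum_list (map \<chi> (selfs g)) = \<chi> (i,0,i,cstep g i)"
  proof -
    have "sum_list (map \<chi> (selfs g)) = sum_list (map (\<lambda>k. \<chi> (k,0,k,cstep g k)) [1..rank g])"
      unfolding selfs_def by (simp add: o_def)
    also have "\<dots> = (\<Sum>k\<in>set [1..rank g]. \<chi> (k,0,k,cstep g k))"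
      by (rule sum_list_distinct_conv_sum_set) simp
    also have "\<dots> = (\<Sum>k\<in>{1..rank g}. if k = i then \<chi> (i,0,i,cstep g i) else 0)"
      by (rule sum.cong) (auto simp: van2)
    also have "\<dots> = \<chi> (i,0,i,cstep g i)" using assms(2,3) by simp
    finally show ?thesis .
  qed
  show ?thesis using e s1 s2 by simp
qed

lemma Qeps_internal:
  assumes v: "valid_type g" and m: "m > 0" and i: "1 \<le> i" "i \<le> rank g"
    and z: "0 \<le> z" "z < nsteps g m" "0 \<le> z'" "z' < nsteps g m"
  shows "Qeps g m (i,z) (i,z') = (if (z' - cstep g i) mod nsteps g m = z then 1 else 0)
                               - (if (z - cstep g i) mod nsteps g m = z' then 1 else 0)"
proof -
  obtain prs where prs: "struct_ok g prs" using struct_ex[OF v] by blast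
  define N where "N = nsteps g m"
  define \<chi> where "\<chi> = (\<lambda>(fa,fx,fb,fy).
      (if fa = i \<and> fb = i \<and> 0 \<le> z' \<and> z' < N \<and> (z' - fy + fx) mod N = z then 1 else 0)
    - (if fa = i \<and> fb = i \<and> 0 \<le> z \<and> z < N \<and> (z - fy + fx) mod N = z' then 1 else (0::int)))"
  have "Qeps g m (i,z) (i,z') = sum_list (map \<chi> (arrow_families g))"
    unfolding Qeps_formula[OF m] \<chi>_def N_def ..
  also have "\<dots> = \<chi> (i,0,i,cstep g i)"
    by (rule sum_self_chi[OF prs i]) (auto simp: \<chi>_def)
  finally show ?thesis using z by (simp add: \<chi>_def N_def)
qed


lemma cyc_len: "length (cycle_verts g m i \<gamma>) = nat (nsteps g m div cstep g i)"
  by (simp add: cycle_verts_def)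

lemma cyc_nth:
  assumes "0 \<le> \<gamma>" "\<gamma> < cstep g i" "k < nat (nsteps g m div cstep g i)"
  shows "cycle_verts g m i \<gamma> ! k = (i, \<gamma> + int k * cstep g i)"
    and "0 \<le> \<gamma> + int k * cstep g i" "\<gamma> + int k * cstep g i < nsteps g m"
proof -
  define c where "c = cstep g i"
  define N where "N = nsteps g m"
  have c: "1 \<le> c" using cs_pos by (simp add: c_def)
  have Nc: "N = (N div c) * c" using cs_dvd[of g i m] by (simp add: c_def N_def)
  have k: "int k + 1 \<le> N div c" using assms(3) by (simp add: c_def N_def)
  have "\<gamma> + int k * c < c + int k * c" using assms(2) by (simp add: c_def)
  also have "\<dots> = (int k + 1) * c" by (simp add: algebra_simps)
  also have "\<dots> \<le> (N div c) * c" using k c by (intro mult_right_mono) auto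
  finally have lt: "\<gamma> + int k * c < N" using Nc by simp
  have ge: "0 \<le> \<gamma> + int k * c" using assms(1) c by simp
  show "cycle_verts g m i \<gamma> ! k = (i, \<gamma> + int k * cstep g i)"
    using assms(3) lt ge by (simp add: cycle_verts_def c_def N_def)
  show "0 \<le> \<gamma> + int k * cstep g i" "\<gamma> + int k * cstep g i < nsteps g m"
    using lt ge by (simp_all add: c_def N_def)
qed

lemma cyc_count:
  fixes X \<gamma> c :: int
  assumes c: "1 \<le> c" and g: "0 \<le> \<gamma>" "\<gamma> < c" and X: "0 \<le> X" "X < int p * c"
  shows "(\<Sum>k\<in>{0..<p}. if X = \<gamma> + int k * c then 1 else 0 :: int) = (if X mod c = \<gamma> then 1 else 0)"
proof (cases "X mod c = \<gamma>")
  case True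
  define k0 where "k0 = nat (X div c)"
  have dpos: "0 \<le> X div c" using X c by (simp add: pos_imp_zdiv_nonneg_iff)
  have ik: "int k0 = X div c" using dpos by (simp add: k0_def)
  have "X = X div c * c + X mod c" by simp
  then have Xe: "X = \<gamma> + int k0 * c" using True ik by simp
  have "int k0 * c < int p * c" using Xe X g by linarith
  then have k0p: "k0 < p" using c by (simp add: mult_less_cancel_right)
  have inj: "\<gamma> + int k * c = X \<longleftrightarrow> k = k0" for k
  proof -
    have "\<gamma> + int k * c = X \<longleftrightarrow> int k * c = int k0 * c" using Xe by linarith
    also have "\<dots> \<longleftrightarrow> k = k0" using c by simp
    finally show ?thesis .
  qed
  have "(\<Sum>k\<in>{0..<p}. if X = \<gamma> + int k * c then 1 else 0 :: int) = (\<Sum>k\<in>{0..<p}. if k = k0 then 1 else 0)"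
    by (rule sum.cong[OF refl]) (use inj in metis)
  also have "\<dots> = 1" using k0p by simp
  finally show ?thesis using True by simp
next
  case False
  have "X \<noteq> \<gamma> + int k * c" for k
  proof
    assume "X = \<gamma> + int k * c"
    then have "X mod c = \<gamma>" using g by simp
    then show False using False by simp
  qed
  then show ?thesis using False by simp
qed

lemma Qeps_colsum:
  assumes v: "valid_type g" and m: "m > 0" and g: "0 \<le> \<gamma>" "\<gamma> < cstep g i"
  shows "(\<Sum>k\<in>{0..<nat (nsteps g m div cstep g i)}. Qeps g m (cycle_verts g m i \<gamma> ! k) w) = 0"
proof -
  obtain prs where prs: "struct_ok g prs" using struct_ex[OF v] by blast
  obtain b z' where w: "w = (b,z')" by (cases w)
  define c where "c = cstep g i"
  define N where "N = nsteps g m"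
  define p where "p = nat (N div c)"
  have c: "1 \<le> c" using cs_pos by (simp add: c_def)
  have N: "0 < N" using nsteps_pos[OF m] by (simp add: N_def)
  have cN: "c dvd N" using cs_dvd by (simp add: c_def N_def)
  have Np: "N = int p * c" using cN N c by (simp add: p_def pos_imp_zdiv_nonneg_iff)
  have gc: "0 \<le> \<gamma>" "\<gamma> < c" using g by (simp_all add: c_def)
  define \<Phi> where "\<Phi> = (\<lambda>k::nat. \<lambda>(fa,fx,fb,fy).
      (if fa = i \<and> fb = b \<and> 0 \<le> z' \<and> z' < N \<and> (z' - fy + fx) mod N = \<gamma> + int k * c then 1 else 0)
    - (if fa = b \<and> fb = i \<and> 0 \<le> \<gamma> + int k * c \<and> \<gamma> + int k * c < N \<and> (\<gamma> + int k * c - fy + fx) mod N = z' then 1 else (0::int)))"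
  have step1: "(\<Sum>k\<in>{0..<p}. Qeps g m (cycle_verts g m i \<gamma> ! k) w) = (\<Sum>k\<in>{0..<p}. sum_list (map (\<Phi> k) (arrow_families g)))"
  proof (rule sum.cong[OF refl])
    fix k assume "k \<in> {0..<p}"
    then have k: "k < nat (nsteps g m div cstep g i)" by (simp add: p_def c_def N_def)
    show "Qeps g m (cycle_verts g m i \<gamma> ! k) w = sum_list (map (\<Phi> k) (arrow_families g))"
      unfolding cyc_nth(1)[OF g k] w Qeps_formula[OF m] \<Phi>_def c_def N_def ..
  qed
  have step2: "(\<Sum>k\<in>{0..<p}. \<Phi> k f) = (if 0 \<le> z' \<and> z' < N then psi c i b z' \<gamma> f else 0)" for f
  proof -
    obtain fa fx fb fy where f: "f = (fa,fx,fb,fy)" by (metis prod.exhaust)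
    have t1: "(\<Sum>k\<in>{0..<p}. if fa = i \<and> fb = b \<and> 0 \<le> z' \<and> z' < N \<and> (z' - fy + fx) mod N = \<gamma> + int k * c then 1 else 0 :: int)
       = (if fa = i \<and> fb = b \<and> 0 \<le> z' \<and> z' < N \<and> (z' - fy + fx) mod c = \<gamma> then 1 else 0)"
    proof (cases "fa = i \<and> fb = b \<and> 0 \<le> z' \<and> z' < N")
      case True
      have "(\<Sum>k\<in>{0..<p}. if (z' - fy + fx) mod N = \<gamma> + int k * c then 1 else 0 :: int)
          = (if (z' - fy + fx) mod N mod c = \<gamma> then 1 else 0)"
        by (rule cyc_count[OF c gc]) (use N Np in auto)
      moreover have "(z' - fy + fx) mod N mod c = (z' - fy + fx) mod c" using cN by (simp add: mod_mod_cancel)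
      ultimately show ?thesis using True by simp
    next
      case False
      then have "\<And>k. (if fa = i \<and> fb = b \<and> 0 \<le> z' \<and> z' < N \<and> (z' - fy + fx) mod N = \<gamma> + int k * c then 1 else 0 :: int) = 0"
        by auto
      then show ?thesis using False by auto
    qed
    have t2: "(\<Sum>k\<in>{0..<p}. if fa = b \<and> fb = i \<and> 0 \<le> \<gamma> + int k * c \<and> \<gamma> + int k * c < N \<and> (\<gamma> + int k * c - fy + fx) mod N = z' then 1 else 0 :: int)
       = (if fa = b \<and> fb = i \<and> 0 \<le> z' \<and> z' < N \<and> (z' + fy - fx) mod c = \<gamma> then 1 else 0)"
    proof -
      have rng: "0 \<le> \<gamma> + int k * c \<and> \<gamma> + int k * c < N" if "k \<in> {0..<p}" for k
        using cyc_nth(2,3)[OF g, of k m] that by (simp add: p_def c_def N_def)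
      have eq: "(\<gamma> + int k * c - fy + fx) mod N = z' \<longleftrightarrow> 0 \<le> z' \<and> z' < N \<and> (z' + fy - fx) mod N = \<gamma> + int k * c"
        if "k \<in> {0..<p}" for k
      proof -
        have "(\<gamma> + int k * c + (fx - fy)) mod N = z' \<longleftrightarrow> 0 \<le> z' \<and> z' < N \<and> \<gamma> + int k * c = (z' - (fx - fy)) mod N"
          by (rule mod_shift_eq[OF N]) (use rng[OF that] in auto)
        then show ?thesis by (auto simp: algebra_simps)
      qed
      have "(\<Sum>k\<in>{0..<p}. if fa = b \<and> fb = i \<and> 0 \<le> \<gamma> + int k * c \<and> \<gamma> + int k * c < N \<and> (\<gamma> + int k * c - fy + fx) mod N = z' then 1 else 0 :: int)
          = (\<Sum>k\<in>{0..<p}. if fa = b \<and> fb = i \<and> 0 \<le> z' \<and> z' < N \<and> (z' + fy - fx) mod N = \<gamma> + int k * c then 1 else 0 :: int)"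
        by (rule sum.cong[OF refl]) (use rng eq in auto)
      also have "\<dots> = (if fa = b \<and> fb = i \<and> 0 \<le> z' \<and> z' < N \<and> (z' + fy - fx) mod c = \<gamma> then 1 else 0)"
      proof (cases "fa = b \<and> fb = i \<and> 0 \<le> z' \<and> z' < N")
        case True
        have "(\<Sum>k\<in>{0..<p}. if (z' + fy - fx) mod N = \<gamma> + int k * c then 1 else 0 :: int)
            = (if (z' + fy - fx) mod N mod c = \<gamma> then 1 else 0)"
          by (rule cyc_count[OF c gc]) (use N Np in auto)
        moreover have "(z' + fy - fx) mod N mod c = (z' + fy - fx) mod c" using cN by (simp add: mod_mod_cancel)
        ultimately show ?thesis using True by simp
      next
        case False
        then have "\<And>k. (if fa = b \<and> fb = i \<and> 0 \<le> z' \<and> z' < N \<and> (z' + fy - fx) mod N = \<gamma> + int k * c then 1 else 0 :: int) = 0"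
          by auto
        then show ?thesis using False by auto
      qed
      finally show ?thesis .
    qed
    show ?thesis unfolding f \<Phi>_def psi_def prod.case sum_subtractf t1 t2 by auto
  qed
  have "(\<Sum>k\<in>{0..<p}. sum_list (map (\<Phi> k) (arrow_families g)))
      = sum_list (map (\<lambda>f. \<Sum>k\<in>{0..<p}. \<Phi> k f) (arrow_families g))"
    by (rule sum_list_swap)
  also have "\<dots> = sum_list (map (\<lambda>f. if 0 \<le> z' \<and> z' < N then psi c i b z' \<gamma> f else 0) (arrow_families g))"
    unfolding step2 ..
  also have "\<dots> = (if 0 \<le> z' \<and> z' < N then sum_list (map (psi c i b z' \<gamma>) (arrow_families g)) else 0)"
    by (induction "arrow_families g") auto
  also have "\<dots> = 0" using sum_psi_zero[OF prs, of i b z' \<gamma>] by (simp add: c_def)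
  finally show ?thesis using step1 by (simp add: p_def c_def N_def)
qed


lemma prod_powi_sum: "finite C \<Longrightarrow> (\<kappa>::complex) \<noteq> 0 \<Longrightarrow> (\<Prod>w\<in>C. \<kappa> powi n w) = \<kappa> powi (\<Sum>w\<in>C. n w)"
  by (induction C rule: finite_induct) (simp_all add: power_int_add)

lemma Qverts_finite: "finite (Qverts g m)"
proof -
  have "Qverts g m \<subseteq> {1..rank g} \<times> {0..<nsteps g m}" by (auto simp: Qverts_def)
  then show ?thesis by (rule finite_subset) simp
qed

lemma pstar_scl:
  assumes C: "C \<subseteq> Qverts g m" and k: "\<kappa> \<noteq> 0" and s: "(\<Sum>w\<in>C. Qeps g m u w) = 0"
  shows "pstar g m (scl C \<kappa> A) u = pstar g m A u"
proof -
  define V where "V = Qverts g m"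
  have fV: "finite V" by (simp add: V_def Qverts_finite)
  have "pstar g m (scl C \<kappa> A) u = (\<Prod>w\<in>V. (if w \<in> C then \<kappa> powi Qeps g m u w else 1) * A w powi Qeps g m u w)"
    unfolding pstar_def V_def[symmetric] by (rule prod.cong) (auto simp: scl_def power_int_mult_distrib)
  also have "\<dots> = (\<Prod>w\<in>V. (if w \<in> C then \<kappa> powi Qeps g m u w else 1)) * pstar g m A u"
    unfolding pstar_def V_def[symmetric] by (rule prod.distrib)
  also have "(\<Prod>w\<in>V. (if w \<in> C then \<kappa> powi Qeps g m u w else 1)) = (\<Prod>w\<in>V \<inter> C. \<kappa> powi Qeps g m u w)"
    using fV by (simp add: prod.If_cases)
  also have "V \<inter> C = C" using C by (auto simp: V_def)
  also have "(\<Prod>w\<in>C. \<kappa> powi Qeps g m u w) = 1"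
    using prod_powi_sum[OF finite_subset[OF C[folded V_def] fV] k] s by simp
  finally show ?thesis by simp
qed

lemma trace_prefix_set: "set (trace V xs s) \<subseteq> set (trace V (xs@ys) s)"
proof (induction xs arbitrary: s)
  case Nil then show ?case by (cases ys) auto
next
  case (Cons x xs)
  show ?case using Cons[of "apply_step V x s"] by (simp del: apply_step.simps) blast
qed

lemma shiftc:
  fixes \<gamma> c :: int and p a b :: nat
  assumes c: "1 \<le> c" and g: "0 \<le> \<gamma>" "\<gamma> < c" and ab: "a < p" "b < p"
  shows "((\<gamma> + int a * c + c) mod (int p * c) = \<gamma> + int b * c) \<longleftrightarrow> b = (Suc a) mod p"
proof (cases "Suc a < p")
  case True
  have lt: "\<gamma> + int a * c + c < int p * c"
  proof -
    have "\<gamma> + int a * c + c < c + int a * c + c" using g by simp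
    also have "\<dots> = int (Suc a) * c + c" by (simp add: algebra_simps)
    also have "\<dots> = int (Suc (Suc a)) * c" by (simp add: algebra_simps)
    also have "\<dots> \<le> int p * c" using True c by (intro mult_right_mono) auto
    finally show ?thesis .
  qed
  have e0: "\<gamma> + int a * c + c = \<gamma> + int (Suc a) * c" by (simp add: algebra_simps)
  have "(\<gamma> + int a * c + c) mod (int p * c) = \<gamma> + int (Suc a) * c"
    unfolding e0 by (rule mod_pos_pos_trivial) (use lt g c e0 in simp_all)
  moreover have "\<gamma> + int (Suc a) * c = \<gamma> + int b * c \<longleftrightarrow> b = Suc a" using c by auto
  ultimately show ?thesis using True by simp
next
  case False
  then have pa: "p = Suc a" using ab by simp
  have e0: "\<gamma> + int a * c + c = \<gamma> + int p * c" by (simp add: pa algebra_simps)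
  have pc: "c \<le> int p * c" using pa c by (simp add: mult_le_cancel_right1)
  have e1: "(\<gamma> + int a * c + c) mod (int p * c) = \<gamma> mod (int p * c)"
    unfolding e0 by (rule mod_add_self2)
  have "\<gamma> < int p * c" using g pc by linarith
  then have "\<gamma> mod (int p * c) = \<gamma>" using g by (simp add: mod_pos_pos_trivial)
  then have e: "(\<gamma> + int a * c + c) mod (int p * c) = \<gamma>" using e1 by simp
  have "\<gamma> = \<gamma> + int b * c \<longleftrightarrow> b = 0" using c by auto
  then show ?thesis using e pa by simp
qed

lemma Qeps_cyc_F:
  assumes v: "valid_type g" and m: "m > 0" and i: "1 \<le> i" "i \<le> rank g" and g: "0 \<le> \<gamma>" "\<gamma> < cstep g i"
    and ab: "a < nat (nsteps g m div cstep g i)" "b < nat (nsteps g m div cstep g i)"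
  shows "Qeps g m (cycle_verts g m i \<gamma> ! a) (cycle_verts g m i \<gamma> ! b) = F (nat (nsteps g m div cstep g i)) 0 a b"
proof -
  define c where "c = cstep g i"
  define N where "N = nsteps g m"
  define p where "p = nat (N div c)"
  have c: "1 \<le> c" using cs_pos by (simp add: c_def)
  have N: "0 < N" using nsteps_pos[OF m] by (simp add: N_def)
  have cN: "c dvd N" using cs_dvd by (simp add: c_def N_def)
  have Np: "N = int p * c" using cN N c by (simp add: p_def pos_imp_zdiv_nonneg_iff)
  have gc: "0 \<le> \<gamma>" "\<gamma> < c" using g by (simp_all add: c_def)
  have ap: "a < p" "b < p" using ab by (simp_all add: p_def c_def N_def)
  define za where "za = \<gamma> + int a * c"
  define zb where "zb = \<gamma> + int b * c"
  have ra: "0 \<le> za" "za < N" using cyc_nth(2,3)[OF g ab(1)] by (simp_all add: za_def c_def N_def)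
  have rb: "0 \<le> zb" "zb < N" using cyc_nth(2,3)[OF g ab(2)] by (simp_all add: zb_def c_def N_def)
  have q: "Qeps g m (cycle_verts g m i \<gamma> ! a) (cycle_verts g m i \<gamma> ! b)
      = (if (zb - c) mod N = za then 1 else 0) - (if (za - c) mod N = zb then 1 else 0)"
    unfolding cyc_nth(1)[OF g ab(1)] cyc_nth(1)[OF g ab(2)]
    using Qeps_internal[OF v m i ra[unfolded N_def za_def c_def] rb[unfolded N_def zb_def c_def]]
    by (simp add: za_def zb_def c_def N_def)
  have e1: "(zb - c) mod N = za \<longleftrightarrow> b = Suc a mod p"
  proof -
    have "(za + c) mod N = zb \<longleftrightarrow> 0 \<le> zb \<and> zb < N \<and> za = (zb - c) mod N"
      by (rule mod_shift_eq[OF N ra])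
    then have "(zb - c) mod N = za \<longleftrightarrow> (za + c) mod N = zb" using rb by auto
    also have "\<dots> \<longleftrightarrow> b = Suc a mod p" unfolding za_def zb_def Np by (rule shiftc[OF c gc ap])
    finally show ?thesis .
  qed
  have e2: "(za - c) mod N = zb \<longleftrightarrow> a = Suc b mod p"
  proof -
    have "(zb + c) mod N = za \<longleftrightarrow> 0 \<le> za \<and> za < N \<and> zb = (za - c) mod N"
      by (rule mod_shift_eq[OF N rb])
    then have "(za - c) mod N = zb \<longleftrightarrow> (zb + c) mod N = za" using ra by auto
    also have "\<dots> \<longleftrightarrow> a = Suc b mod p" unfolding za_def zb_def Np by (rule shiftc[OF c gc ap(2,1)])
    finally show ?thesis .
  qed
  have pe: "nat (nsteps g m div cstep g i) = p" by (simp add: p_def c_def N_def)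
  show ?thesis unfolding pe q e1 e2 F_L0[OF ap] by simp
qed


lemma sum_list_neg: "sum_list (map (\<lambda>x. - f x) xs) = - sum_list (map f xs :: int list)"
  by (induction xs) auto

lemma Qeps_skew: assumes m: "m > 0" shows "skew (Qeps g m)"
  unfolding skew_def
proof (intro allI)
  fix u v :: vertex
  obtain a z where u: "u = (a,z)" by (cases u)
  obtain b z' where v: "v = (b,z')" by (cases v)
  show "Qeps g m u v = - Qeps g m v u"
    unfolding u v Qeps_formula[OF m] sum_list_neg[symmetric]
    by (rule arg_cong[where f=sum_list], rule map_cong[OF refl]) (auto simp: case_prod_beta)
qed

lemma cyc_props:
  assumes m: "2 \<le> m" and i: "1 \<le> i" "i \<le> rank g" and g: "0 \<le> \<gamma>" "\<gamma> < cstep g i"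
  shows "length (cycle_verts g m i \<gamma>) = nat (nsteps g m div cstep g i)"
    and "2 \<le> nat (nsteps g m div cstep g i)"
    and "distinct (cycle_verts g m i \<gamma>)"
    and "set (cycle_verts g m i \<gamma>) \<subseteq> Qverts g m"
proof -
  show l: "length (cycle_verts g m i \<gamma>) = nat (nsteps g m div cstep g i)" by (rule cyc_len)
  show "2 \<le> nat (nsteps g m div cstep g i)" using p_ge2[OF m, of g i] by linarith
  have c: "1 \<le> cstep g i" by (rule cs_pos)
  show "distinct (cycle_verts g m i \<gamma>)"
    unfolding distinct_conv_nth l
  proof (intro allI impI)
    fix a b assume h: "a < nat (nsteps g m div cstep g i)" "b < nat (nsteps g m div cstep g i)" "a \<noteq> b"
    show "cycle_verts g m i \<gamma> ! a \<noteq> cycle_verts g m i \<gamma> ! b"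
      unfolding cyc_nth(1)[OF g h(1)] cyc_nth(1)[OF g h(2)] using h(3) c by auto
  qed
  show "set (cycle_verts g m i \<gamma>) \<subseteq> Qverts g m"
  proof
    fix x assume "x \<in> set (cycle_verts g m i \<gamma>)"
    then obtain k where k: "k < nat (nsteps g m div cstep g i)" "x = cycle_verts g m i \<gamma> ! k"
      unfolding in_set_conv_nth l by blast
    show "x \<in> Qverts g m" unfolding k(2) cyc_nth(1)[OF g k(1)] Qverts_def
      using cyc_nth(2,3)[OF g k(1)] i by simp
  qed
qed

lemma R_cycle:
  assumes v: "valid_type g" and m: "2 \<le> m" and i: "1 \<le> i" "i \<le> rank g" and g: "0 \<le> \<gamma>" "\<gamma> < cstep g i"
    and nz: "\<forall>s\<in>set (trace (Qverts g m) (R_seq (cycle_verts g m i \<gamma>)) (Qeps g m, A)). \<forall>v\<in>Qverts g m. snd s v \<noteq> 0"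
  shows "\<exists>\<kappa>. \<kappa> \<noteq> 0 \<and> run (Qverts g m) (R_seq (cycle_verts g m i \<gamma>)) (Qeps g m, A)
            = (Qeps g m, scl (set (cycle_verts g m i \<gamma>)) \<kappa> A)"
proof -
  have m0: "m > 0" using m by simp
  show ?thesis
  proof (rule cycle_main[OF Qverts_finite cyc_props(4)[OF m i g] cyc_props(3)[OF m i g] cyc_props(1)[OF m i g]
        cyc_props(2)[OF m i g] Qeps_skew[OF m0] _ _ nz])
    show "\<forall>a<nat (nsteps g m div cstep g i). \<forall>b<nat (nsteps g m div cstep g i).
      Qeps g m (cycle_verts g m i \<gamma> ! a) (cycle_verts g m i \<gamma> ! b) = F (nat (nsteps g m div cstep g i)) 0 a b"
      using Qeps_cyc_F[OF v m0 i g] by blast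
    show "\<forall>w. w \<notin> set (cycle_verts g m i \<gamma>) \<longrightarrow>
      (\<Sum>k = 0..<nat (nsteps g m div cstep g i). Qeps g m (cycle_verts g m i \<gamma> ! k) w) = 0"
      using Qeps_colsum[OF v m0 g] by blast
  qed
qed

lemma cyc_rowsum:
  assumes v: "valid_type g" and m: "2 \<le> m" and i: "1 \<le> i" "i \<le> rank g" and g: "0 \<le> \<gamma>" "\<gamma> < cstep g i"
  shows "(\<Sum>w\<in>set (cycle_verts g m i \<gamma>). Qeps g m u w) = 0"
proof -
  have m0: "m > 0" using m by simp
  define vs where "vs = cycle_verts g m i \<gamma>"
  have d: "distinct vs" using cyc_props(3)[OF m i g] by (simp add: vs_def)
  have l: "length vs = nat (nsteps g m div cstep g i)" using cyc_props(1)[OF m i g] by (simp add: vs_def)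
  have s: "\<And>x y. Qeps g m x y = - Qeps g m y x" using Qeps_skew[OF m0] unfolding skew_def by blast
  have "(\<Sum>w\<in>set vs. Qeps g m u w) = sum_list (map (Qeps g m u) vs)"
    by (rule sum_list_distinct_conv_sum_set[OF d, symmetric])
  also have "\<dots> = (\<Sum>k = 0..<length vs. Qeps g m u (vs!k))"
    by (simp add: sum_list_sum_nth)
  also have "\<dots> = - (\<Sum>k = 0..<length vs. Qeps g m (vs!k) u)"
    by (simp add: s[of u] sum_negf)
  also have "\<dots> = 0" using Qeps_colsum[OF v m0 g, of u] l by (simp add: vs_def)
  finally show ?thesis by (simp add: vs_def)
qed

lemma Ri_loop:
  assumes v: "valid_type g" and m: "2 \<le> m" and i: "1 \<le> i" "i \<le> rank g"
  shows "(\<forall>\<gamma>\<in>set L. 0 \<le> \<gamma> \<and> \<gamma> < cstep g i) \<Longrightarrow>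
    (\<forall>s\<in>set (trace (Qverts g m) (concat (map (\<lambda>\<gamma>. R_seq (cycle_verts g m i \<gamma>)) L)) (Qeps g m, A)).
        \<forall>v\<in>Qverts g m. snd s v \<noteq> 0) \<Longrightarrow>
    fst (run (Qverts g m) (concat (map (\<lambda>\<gamma>. R_seq (cycle_verts g m i \<gamma>)) L)) (Qeps g m, A)) = Qeps g m
    \<and> pstar g m (snd (run (Qverts g m) (concat (map (\<lambda>\<gamma>. R_seq (cycle_verts g m i \<gamma>)) L)) (Qeps g m, A))) u
      = pstar g m A u"
proof (induction L arbitrary: A)
  case Nil then show ?case by simp
next
  case (Cons \<gamma> L)
  define V where "V = Qverts g m"
  define xs where "xs = R_seq (cycle_verts g m i \<gamma>)"
  define rest where "rest = concat (map (\<lambda>\<gamma>. R_seq (cycle_verts g m i \<gamma>)) L)"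
  have eq: "concat (map (\<lambda>\<gamma>. R_seq (cycle_verts g m i \<gamma>)) (\<gamma> # L)) = xs @ rest"
    by (simp add: xs_def rest_def)
  have g: "0 \<le> \<gamma>" "\<gamma> < cstep g i" using Cons.prems(1) by auto
  have nz: "\<forall>s\<in>set (trace V (xs @ rest) (Qeps g m, A)). \<forall>v\<in>V. snd s v \<noteq> 0"
    using Cons.prems(2) unfolding eq V_def by blast
  have nz1: "\<forall>s\<in>set (trace V xs (Qeps g m, A)). \<forall>v\<in>V. snd s v \<noteq> 0"
    using nz trace_prefix_set[of V xs _ rest] by blast
  obtain \<kappa> where k: "\<kappa> \<noteq> 0" and r: "run V xs (Qeps g m, A) = (Qeps g m, scl (set (cycle_verts g m i \<gamma>)) \<kappa> A)"
    using R_cycle[OF v m i g nz1[unfolded V_def xs_def]] unfolding V_def xs_def by blast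
  define A' where "A' = scl (set (cycle_verts g m i \<gamma>)) \<kappa> A"
  have nz2: "\<forall>s\<in>set (trace V rest (Qeps g m, A')). \<forall>v\<in>V. snd s v \<noteq> 0"
    using nz trace_append_set[of V rest xs "(Qeps g m, A)"] r unfolding A'_def by auto
  have IH: "fst (run V rest (Qeps g m, A')) = Qeps g m \<and> pstar g m (snd (run V rest (Qeps g m, A'))) u = pstar g m A' u"
    using Cons.IH[of A'] Cons.prems(1) nz2 unfolding V_def rest_def by auto
  have ps: "pstar g m A' u = pstar g m A u"
    unfolding A'_def by (rule pstar_scl[OF cyc_props(4)[OF m i g] k cyc_rowsum[OF v m i g]])
  have "run V (xs @ rest) (Qeps g m, A) = run V rest (Qeps g m, A')" using r by (simp add: A'_def)
  then show ?case using IH ps unfolding eq V_def by simp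
qed

theorem proposition3p5:
  fixes g :: lie_type and m :: nat and i :: int and u :: vertex
    and A :: "vertex \<Rightarrow> complex"
  assumes "valid_type g" and "m > 1"
    and "1 \<le> i" and "i \<le> rank g"
    and "u \<in> Qverts g m"
    and "\<forall>s\<in>set (trace (Qverts g m) (Ri_seq g m i) (Qeps g m, A)).
           \<forall>v\<in>Qverts g m. snd s v \<noteq> 0"
  shows "pstar g m (snd (last (trace (Qverts g m) (Ri_seq g m i) (Qeps g m, A)))) u
         = pstar g m A u"
proof -
  have m: "2 \<le> m" using assms(2) by simp
  have L: "\<forall>\<gamma>\<in>set (rev [0..cstep g i - 1]). 0 \<le> \<gamma> \<and> \<gamma> < cstep g i" by auto
  have R: "Ri_seq g m i = concat (map (\<lambda>\<gamma>. R_seq (cycle_verts g m i \<gamma>)) (rev [0..cstep g i - 1]))"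
    by (simp add: Ri_seq_def)
  show ?thesis
    unfolding last_trace R
    using Ri_loop[OF assms(1) m assms(3,4) L, of A u] assms(6) unfolding R by blast
qed


end
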